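(* Let ${\bf X}$ be a finite-dimensional real Hilbert space, ${\cal M}$ a ${\cal C}^2$-smooth manifold of codimension $m$ around ${\bar x}$ with ${\cal M}\cap{\cal O}=\{x\in{\cal O}\mid\Phi(x)=0\}$ ($\Phi:{\cal O}\to\mathbb{R}^m$ ${\cal C}^2$, $\nabla\Phi({\bar x})$ surjective), and $f:{\bf X}\to\overline{\mathbb{R}}$ ${\cal C}^2$-partly smooth at ${\bar x}$ relative to ${\cal M}$ with ${\cal C}^2$-smooth representative $\widehat f$ around ${\bar x}$; let ${\bar v}\in{\rm ri}\,\partial f({\bar x})$. Assume $f$ is prox-regular and subdifferentially continuous at ${\bar x}$ for ${\bar v}$, and $f$ is prox-bounded. Let $L(u,y):=\widehat f(u)+\langle y,\Phi(u)\rangle$. Then for every $r>0$ sufficiently small, the proximal mapping ${\rm prox}_{rf}$ is ${\cal M}$-valued and ${\cal C}^1$-smooth around ${\bar x}+r{\bar v}$, with $$\nabla({\rm prox}_{rf})(z)=\big(P_{T_{\cal M}(x)}\circ(I_{\bf X}+r\nabla^2_{xx}L(x,\mu))|_{T_{\cal M}(x)}\big)^{-1}\circ P_{T_{\cal M}(x)},$$ where $x={\rm prox}_{rf}(z)$ and $\mu\in\mathbb{R}^m$ is the unique vector with $\nabla_xL(x,\mu)=(z-x)/r$.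
   Context: ${\rm prox}_{rf}(x)=\arg\min_{w}\{f(w)+\frac1{2r}\|w-x\|^2\}$. $f$ is prox-bounded if $f+\alpha\|\cdot\|^2$ is bounded below for some $\alpha\in\mathbb{R}$. $I_{\bf X}$ identity; $P_T$ orthogonal projection; $A|_T$ restriction; $T_{\cal M}(x)=\ker\nabla\Phi(x)$, $N_{\cal M}(x)={\rm rge}\,\nabla\Phi(x)^*$. $\partial f$ limiting subdifferential; ${\rm ri}$, ${\rm aff}$ relative interior, affine hull; ${\rm par}\,C$ subspace parallel to ${\rm aff}\,C$. ${\cal C}^2$-partial smoothness at ${\bar x}$ relative to ${\cal M}$: (a) there is $\widehat f:{\bf X}\to\mathbb{R}$, ${\cal C}^2$ around ${\bar x}$, equal to $f$ on ${\cal M}$ near ${\bar x}$; (b) at each $x\in{\cal M}$ near ${\bar x}$, $f$ is subdifferentially regular with $\partial f(x)\ne\emptyset$; (c) $N_{\cal M}({\bar x})={\rm par}\,\partial f({\bar x})$; (d) $\lim_{x\to{\bar x},x\in{\cal M}}\partial f(x)$ exists (Painlevé–Kuratowski) and equals $\partial f({\bar x})$. Prox-regularity at ${\bar x}$ for ${\bar v}$: $f({\bar x})$ finite, $f$ locally lsc near ${\bar x}$, ${\bar v}\in\partial f({\bar x})$, and there exist $\epsilon>0,\rho\ge0$ with $f(u)\ge f(x')+\langle v',u-x'\rangle-\frac\rho2\|u-x'\|^2$ for all $u\in\mathbb{B}_\epsilon({\bar x})$ whenever $(x',v')\in\mathbb{B}_\epsilon({\bar x},{\bar v})\cap{\rm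 gph}\,\partial f$, $f(x')\le f({\bar x})+\epsilon$. Subdifferential continuity: $(x^k,v^k)\to({\bar x},{\bar v})$, $v^k\in\partial f(x^k)$ imply $f(x^k)\to f({\bar x})$. *)

theory Defs
  imports "HOL-Analysis.Analysis"
begin

definition C1_on :: "'a::euclidean_space set \<Rightarrow> ('a \<Rightarrow> 'b::euclidean_space) \<Rightarrow> bool" where
  "C1_on U g \<longleftrightarrow> open U \<and> (\<exists>D :: 'a \<Rightarrow> ('a \<Rightarrow>\<^sub>L 'b).
      (\<forall>x\<in>U. (g has_derivative blinfun_apply (D x)) (at x)) \<and> continuous_on U D)"

definition C2_on :: "'a::euclidean_space set \<Rightarrow> ('a \<Rightarrow> 'b::euclidean_space) \<Rightarrow> bool" where
  "C2_on U g \<longleftrightarrow> open U \<and> (\<exists>(D :: 'a \<Rightarrow> ('a \<Rightarrow>\<^sub>L 'b)) (D2 :: 'a \<Rightarrow> ('a \<Rightarrow>\<^sub>L ('a \<Rightarrow>\<^sub>L 'b))).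
      (\<forall>x\<in>U. (g has_derivative blinfun_apply (D x)) (at x)) \<and>
      (\<forall>x\<in>U. (D has_derivative blinfun_apply (D2 x)) (at x)) \<and> continuous_on U D2)"

definition grad :: "('a::euclidean_space \<Rightarrow> real) \<Rightarrow> 'a \<Rightarrow> 'a" where
  "grad g x = (\<Sum>b\<in>Basis. frechet_derivative g (at x) b *\<^sub>R b)"

definition hess :: "('a::euclidean_space \<Rightarrow> real) \<Rightarrow> 'a \<Rightarrow> 'a \<Rightarrow> 'a" where
  "hess g x = frechet_derivative (grad g) (at x)"

definition lagr :: "('a \<Rightarrow> real) \<Rightarrow> ('a \<Rightarrow> 'b::real_inner) \<Rightarrow> 'a \<Rightarrow> 'b \<Rightarrow> real" where
  "lagr fhat \<Phi> u y = fhat u + y \<bullet> \<Phi> u"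

definition tangent_sp :: "('a::euclidean_space \<Rightarrow> 'b::euclidean_space) \<Rightarrow> 'a \<Rightarrow> 'a set" where
  "tangent_sp \<Phi> x = {h. frechet_derivative \<Phi> (at x) h = 0}"

definition normal_sp :: "('a::euclidean_space \<Rightarrow> 'b::euclidean_space) \<Rightarrow> 'a \<Rightarrow> 'a set" where
  "normal_sp \<Phi> x = range (adjoint (frechet_derivative \<Phi> (at x)))"

definition orth_proj :: "'a::euclidean_space set \<Rightarrow> 'a \<Rightarrow> 'a" where
  "orth_proj T x = closest_point T x"

definition par :: "'a::euclidean_space set \<Rightarrow> 'a set" where
  "par C = {a - b | a b. a \<in> affine hull C \<and> b \<in> affine hull C}"

definition finite_at :: "('a \<Rightarrow> ereal) \<Rightarrow> 'a \<Rightarrow> bool" where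
  "finite_at f x \<longleftrightarrow> f x \<noteq> \<infinity> \<and> f x \<noteq> -\<infinity>"

text \<open>Regular (Frechet) subdifferential, literal unfolding of
  liminf_{u -> x, u ~= x} (f u - f x - <v,u-x>)/|u-x| >= 0.\<close>

definition reg_subdiff :: "('a::euclidean_space \<Rightarrow> ereal) \<Rightarrow> 'a \<Rightarrow> 'a set" where
  "reg_subdiff f x = {v. finite_at f x \<and> (\<forall>\<epsilon>>0. \<exists>\<delta>>0. \<forall>u. norm (u - x) < \<delta> \<longrightarrow>
      f u \<ge> f x + ereal (v \<bullet> (u - x) - \<epsilon> * norm (u - x)))}"

definition lim_subdiff :: "('a::euclidean_space \<Rightarrow> ereal) \<Rightarrow> 'a \<Rightarrow> 'a set" where
  "lim_subdiff f x = {v. finite_at f x \<and> (\<exists>xs vs. xs \<longlonglongrightarrow> x \<and> (\<lambda>k. f (xs k)) \<longlonglongrightarrow> f x \<and>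
      vs \<longlonglongrightarrow> v \<and> (\<forall>k. vs k \<in> reg_subdiff f (xs k)))}"

definition reg_normal_cone :: "'c::euclidean_space set \<Rightarrow> 'c \<Rightarrow> 'c set" where
  "reg_normal_cone C x = {v. x \<in> C \<and> (\<forall>\<epsilon>>0. \<exists>\<delta>>0. \<forall>y\<in>C. norm (y - x) < \<delta> \<longrightarrow>
      v \<bullet> (y - x) \<le> \<epsilon> * norm (y - x))}"

definition lim_normal_cone :: "'c::euclidean_space set \<Rightarrow> 'c \<Rightarrow> 'c set" where
  "lim_normal_cone C x = {v. x \<in> C \<and> (\<exists>xs vs. (\<forall>k. xs k \<in> C \<and> vs k \<in> reg_normal_cone C (xs k))
      \<and> xs \<longlonglongrightarrow> x \<and> vs \<longlonglongrightarrow> v)}"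

definition locally_closed :: "'c::euclidean_space set \<Rightarrow> 'c \<Rightarrow> bool" where
  "locally_closed C x \<longleftrightarrow> (\<exists>e>0. closed (C \<inter> cball x e))"

definition clarke_regular :: "'c::euclidean_space set \<Rightarrow> 'c \<Rightarrow> bool" where
  "clarke_regular C x \<longleftrightarrow> x \<in> C \<and> locally_closed C x \<and> lim_normal_cone C x = reg_normal_cone C x"

definition epi :: "('a \<Rightarrow> ereal) \<Rightarrow> ('a \<times> real) set" where
  "epi f = {(x, \<alpha>). f x \<le> ereal \<alpha>}"

definition subdiff_regular :: "('a::euclidean_space \<Rightarrow> ereal) \<Rightarrow> 'a \<Rightarrow> bool" where
  "subdiff_regular f x \<longleftrightarrow> finite_at f x \<and> clarke_regular (epi f) (x, real_of_ereal (f x))"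

definition outer_lim_within :: "'a::metric_space set \<Rightarrow> ('a \<Rightarrow> 'b::metric_space set) \<Rightarrow> 'a \<Rightarrow> 'b set" where
  "outer_lim_within M S xb = {v. \<exists>xs vs. (\<forall>k. xs k \<in> M \<and> vs k \<in> S (xs k)) \<and>
      xs \<longlonglongrightarrow> xb \<and> vs \<longlonglongrightarrow> v}"

definition inner_lim_within :: "'a::metric_space set \<Rightarrow> ('a \<Rightarrow> 'b::metric_space set) \<Rightarrow> 'a \<Rightarrow> 'b set" where
  "inner_lim_within M S xb = {v. \<forall>xs. (\<forall>k. xs k \<in> M) \<and> xs \<longlonglongrightarrow> xb \<longrightarrow>
      (\<exists>vs k0. (\<forall>k\<ge>k0. vs k \<in> S (xs k)) \<and> vs \<longlonglongrightarrow> v)}"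

definition partly_smooth :: "('a::euclidean_space \<Rightarrow> ereal) \<Rightarrow> ('a \<Rightarrow> real) \<Rightarrow>
    ('a \<Rightarrow> 'b::euclidean_space) \<Rightarrow> 'a set \<Rightarrow> 'a \<Rightarrow> bool" where
  "partly_smooth f fhat \<Phi> M xb \<longleftrightarrow>
     xb \<in> M \<and>
     (\<exists>U. xb \<in> U \<and> C2_on U fhat \<and> (\<forall>x\<in>M \<inter> U. f x = ereal (fhat x))) \<and>
     (\<exists>\<epsilon>>0. \<forall>x\<in>M. dist x xb < \<epsilon> \<longrightarrow> subdiff_regular f x \<and> lim_subdiff f x \<noteq> {}) \<and>
     normal_sp \<Phi> xb = par (lim_subdiff f xb) \<and>
     outer_lim_within M (lim_subdiff f) xb = lim_subdiff f xb \<and>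
     inner_lim_within M (lim_subdiff f) xb = lim_subdiff f xb"

definition locally_lsc :: "('a::euclidean_space \<Rightarrow> ereal) \<Rightarrow> 'a \<Rightarrow> bool" where
  "locally_lsc f xb \<longleftrightarrow> (\<exists>\<epsilon>>0. \<forall>\<alpha>. ereal \<alpha> \<le> f xb + ereal \<epsilon> \<longrightarrow>
      closed {x \<in> cball xb \<epsilon>. f x \<le> ereal \<alpha>})"

definition prox_regular :: "('a::euclidean_space \<Rightarrow> ereal) \<Rightarrow> 'a \<Rightarrow> 'a \<Rightarrow> bool" where
  "prox_regular f xb vb \<longleftrightarrow> finite_at f xb \<and> locally_lsc f xb \<and> vb \<in> lim_subdiff f xb \<and>
     (\<exists>\<epsilon>>0. \<exists>\<rho>\<ge>0. \<forall>x' v'. dist (x', v') (xb, vb) \<le> \<epsilon> \<and> v' \<in> lim_subdiff f x' \<and>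
        f x' \<le> f xb + ereal \<epsilon> \<longrightarrow>
        (\<forall>u. dist u xb \<le> \<epsilon> \<longrightarrow>
           f u \<ge> f x' + ereal (v' \<bullet> (u - x') - \<rho> / 2 * (norm (u - x'))\<^sup>2)))"

definition subdiff_continuous :: "('a::euclidean_space \<Rightarrow> ereal) \<Rightarrow> 'a \<Rightarrow> 'a \<Rightarrow> bool" where
  "subdiff_continuous f xb vb \<longleftrightarrow> vb \<in> lim_subdiff f xb \<and>
     (\<forall>xs vs. xs \<longlonglongrightarrow> xb \<and> vs \<longlonglongrightarrow> vb \<and> (\<forall>k. vs k \<in> lim_subdiff f (xs k)) \<longrightarrow>
        (\<lambda>k. f (xs k)) \<longlonglongrightarrow> f xb)"

definition prox_bounded :: "('a::euclidean_space \<Rightarrow> ereal) \<Rightarrow> bool" where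
  "prox_bounded f \<longleftrightarrow> (\<exists>\<alpha>::real. \<exists>c::real. \<forall>x. f x + ereal (\<alpha> * (norm x)\<^sup>2) \<ge> ereal c)"

definition prox :: "real \<Rightarrow> ('a::euclidean_space \<Rightarrow> ereal) \<Rightarrow> 'a \<Rightarrow> 'a set" where
  "prox r f x = {w. \<forall>u. f w + ereal ((norm (w - x))\<^sup>2 / (2 * r)) \<le> f u + ereal ((norm (u - x))\<^sup>2 / (2 * r))}"

end

theory Submission
  imports Defs "HOL-Analysis.Analysis"
begin

lemma orth_proj_eq:
  fixes T :: "'a::euclidean_space set"
  assumes T: "subspace T" and y: "y \<in> T" and perp: "\<And>t. t \<in> T \<Longrightarrow> (a - y) \<bullet> t = 0"
  shows "orth_proj T a = y"
proof -
  have cl: "closed T" using T closed_subspace by blast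
  have cv: "convex T" using T subspace_imp_convex by blast
  have pyth: "\<And>p q::'a. p \<bullet> q = 0 \<Longrightarrow> (norm (p+q))\<^sup>2 = (norm p)\<^sup>2 + (norm q)\<^sup>2"
    by (simp add: power2_norm_eq_inner inner_add_left inner_add_right inner_commute)
  have "\<forall>z\<in>T. dist a y \<le> dist a z"
  proof
    fix z assume z: "z \<in> T"
    have yz: "y - z \<in> T" using T y z subspace_diff by blast
    have "(dist a z)\<^sup>2 = (norm ((a - y) + (y - z)))\<^sup>2" by (simp add: dist_norm)
    also have "\<dots> = (norm (a - y))\<^sup>2 + (norm (y - z))\<^sup>2"
      using pyth[OF perp[OF yz]] .
    finally have "(dist a y)\<^sup>2 \<le> (dist a z)\<^sup>2" by (simp add: dist_norm)
    then show "dist a y \<le> dist a z" by (rule power2_le_imp_le[OF _ zero_le_dist])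
  qed
  then show ?thesis unfolding orth_proj_def
    using closest_point_unique[OF cv cl y] by simp
qed

lemma orth_proj_props:
  fixes T :: "'a::euclidean_space set"
  assumes T: "subspace T"
  shows "orth_proj T a \<in> T" "\<And>t. t \<in> T \<Longrightarrow> (a - orth_proj T a) \<bullet> t = 0"
proof -
  obtain y z where y: "y \<in> span T" and z: "\<And>w. w \<in> span T \<Longrightarrow> orthogonal z w" and a: "a = y + z"
    using orthogonal_subspace_decomp_exists by blast
  have yT: "y \<in> T" using y T by (metis span_eq_iff)
  have perp: "\<And>t. t \<in> T \<Longrightarrow> (a - y) \<bullet> t = 0"
    using z a span_base by (fastforce simp: orthogonal_def)
  have "orth_proj T a = y" by (rule orth_proj_eq[OF T yT perp])
  then show "orth_proj T a \<in> T" "\<And>t. t \<in> T \<Longrightarrow> (a - orth_proj T a) \<bullet> t = 0"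
    using yT perp by auto
qed

lemma orth_proj_add_perp:
  fixes T :: "'a::euclidean_space set"
  assumes T: "subspace T" and n: "\<And>t. t \<in> T \<Longrightarrow> n \<bullet> t = 0"
  shows "orth_proj T (a + n) = orth_proj T a"
proof (rule orth_proj_eq[OF T orth_proj_props(1)[OF T]])
  fix t assume t: "t \<in> T"
  have "(a + n - orth_proj T a) \<bullet> t = (a - orth_proj T a) \<bullet> t + n \<bullet> t"
    by (simp add: inner_diff_left inner_add_left)
  then show "(a + n - orth_proj T a) \<bullet> t = 0" using orth_proj_props(2)[OF T t] n[OF t] by simp
qed

lemma orth_proj_self:
  fixes T :: "'a::euclidean_space set"
  assumes "subspace T" "a \<in> T" shows "orth_proj T a = a"
  using orth_proj_eq[OF assms] by simp

lemma ker_perp_range_adjoint: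
  fixes L :: "'a::euclidean_space \<Rightarrow> 'b::euclidean_space"
  assumes L: "linear L" and w: "\<And>h. L h = 0 \<Longrightarrow> w \<bullet> h = 0"
  shows "w \<in> range (adjoint L)"
proof -
  have sub: "subspace (range (adjoint L))"
    using subspace_UNIV linear_subspace_image adjoint_linear[OF L] by blast
  obtain y z where y: "y \<in> span (range (adjoint L))"
    and z: "\<And>u. u \<in> span (range (adjoint L)) \<Longrightarrow> orthogonal z u" and a: "w = y + z"
    using orthogonal_subspace_decomp_exists by blast
  have yR: "y \<in> range (adjoint L)" using y sub by (metis span_eq_iff)
  have "\<And>\<eta>. L z \<bullet> \<eta> = 0"
  proof -
    fix \<eta>
    have "z \<bullet> adjoint L \<eta> = 0" using z[of "adjoint L \<eta>"] span_base[of "adjoint L \<eta>" "range (adjoint L)"] by (auto simp: orthogonal_def)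
    then show "L z \<bullet> \<eta> = 0" using adjoint_works[OF L] by simp
  qed
  then have Lz: "L z = 0" by (metis inner_eq_zero_iff)
  have "w \<bullet> z = 0" using w[OF Lz] .
  moreover have "y \<bullet> z = 0" using z[OF y] by (simp add: orthogonal_def inner_commute)
  ultimately have "z \<bullet> z = 0" using a by (simp add: inner_add_left)
  then have "z = 0" by simp
  then show ?thesis using a yR by simp
qed

lemma range_adjoint_perp_ker:
  fixes L :: "'a::euclidean_space \<Rightarrow> 'b::euclidean_space"
  assumes L: "linear L" and "n \<in> range (adjoint L)" and "L h = 0"
  shows "n \<bullet> h = 0"
  using assms adjoint_clauses(2)[OF L] by auto

lemma surj_adjoint_inj:
  fixes L :: "'a::euclidean_space \<Rightarrow> 'b::euclidean_space"
  assumes L: "linear L" and s: "surj L" and e: "adjoint L \<eta> = 0"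
  shows "\<eta> = 0"
proof -
  obtain h where "L h = \<eta>" using s by (metis surjD)
  then have "\<eta> \<bullet> \<eta> = h \<bullet> adjoint L \<eta>" using adjoint_works[OF L] by simp
  then show ?thesis using e by simp
qed

lemma adjoint_formula:
  fixes L :: "'a::euclidean_space \<Rightarrow> 'b::euclidean_space"
  assumes L: "linear L"
  shows "adjoint L \<eta> = (\<Sum>b\<in>Basis. (\<eta> \<bullet> L b) *\<^sub>R b)"
proof -
  have "adjoint L \<eta> = (\<Sum>b\<in>Basis. (adjoint L \<eta> \<bullet> b) *\<^sub>R b)"
    by (simp add: euclidean_representation)
  also have "\<dots> = (\<Sum>b\<in>Basis. (\<eta> \<bullet> L b) *\<^sub>R b)"
    using adjoint_clauses(2)[OF L] by simp
  finally show ?thesis .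
qed


definition binv :: "('c::euclidean_space \<Rightarrow>\<^sub>L 'c) \<Rightarrow> ('c \<Rightarrow>\<^sub>L 'c)" where
  "binv B = Blinfun (inv (blinfun_apply B))"

lemma binv_props:
  fixes B :: "'c::euclidean_space \<Rightarrow>\<^sub>L 'c"
  assumes inj: "inj (blinfun_apply B)"
  shows "\<And>x. binv B (B x) = x" "\<And>y. B (binv B y) = y" "blinfun_apply (binv B) = inv (blinfun_apply B)"
    "bij (blinfun_apply B)"
proof -
  have lin: "linear (blinfun_apply B)" using blinfun.bounded_linear_right bounded_linear.linear by blast
  have surj: "surj (blinfun_apply B)" using linear_inj_imp_surj[OF lin inj] .
  obtain g where g: "linear g" "\<And>x. g (B x) = x" "\<And>x. B (g x) = x"
    using linear_injective_isomorphism[OF lin inj] by auto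
  have ig: "inv (blinfun_apply B) = g"
    using g by (metis inv_equality)
  have bl: "bounded_linear g" using g(1) linear_conv_bounded_linear by blast
  show "blinfun_apply (binv B) = inv (blinfun_apply B)"
    unfolding binv_def ig using bounded_linear_Blinfun_apply[OF bl] .
  then show "\<And>x. binv B (B x) = x" "\<And>y. B (binv B y) = y" using g ig by auto
  show "bij (blinfun_apply B)" using inj surj by (simp add: bij_def)
qed

lemma binv_lower:
  fixes B :: "'c::euclidean_space \<Rightarrow>\<^sub>L 'c"
  assumes "inj (blinfun_apply B)"
  shows "norm x \<le> norm (binv B) * norm (B x)"
  using norm_blinfun[of "binv B" "B x"] binv_props(1)[OF assms] by simp

lemma binv_near:
  fixes B B0 :: "'c::euclidean_space \<Rightarrow>\<^sub>L 'c"
  assumes i0: "inj (blinfun_apply B0)" and i: "inj (blinfun_apply B)"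
    and small: "2 * norm (binv B0) * norm (B - B0) \<le> 1"
  shows "norm (binv B - binv B0) \<le> 2 * (norm (binv B0))\<^sup>2 * norm (B - B0)"
proof -
  let ?K = "norm (binv B0)"
  have K0: "0 \<le> ?K" by simp
  have low: "norm x \<le> 2 * ?K * norm (B x)" for x
  proof -
    have "norm x \<le> ?K * norm (B0 x)" by (rule binv_lower[OF i0])
    also have "B0 x = B x - (B - B0) x" by (simp add: blinfun.diff_left)
    also have "?K * norm (B x - (B - B0) x) \<le> ?K * (norm (B x) + norm (B - B0) * norm x)"
      by (rule mult_left_mono[OF _ K0]) (meson norm_blinfun norm_triangle_le_diff add_left_mono order_trans)
    also have "\<dots> = ?K * norm (B x) + (?K * norm (B - B0)) * norm x" by (simp add: algebra_simps)
    also have "\<dots> \<le> ?K * norm (B x) + (1/2) * norm x"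
      using small by (intro add_left_mono mult_right_mono) auto
    finally show ?thesis by simp
  qed
  have nb: "norm (binv B) \<le> 2 * ?K"
  proof (rule norm_blinfun_bound)
    show "0 \<le> 2 * ?K" by simp
    fix y
    have "norm (binv B y) \<le> 2 * ?K * norm (B (binv B y))" by (rule low)
    then show "norm (binv B y) \<le> 2 * ?K * norm y" using binv_props(2)[OF i] by simp
  qed
  have eq: "binv B - binv B0 = binv B o\<^sub>L (B0 - B) o\<^sub>L binv B0"
  proof (rule blinfun_eqI)
    fix y
    have "(binv B o\<^sub>L (B0 - B) o\<^sub>L binv B0) y = binv B (B0 (binv B0 y)) - binv B (B (binv B0 y))"
      by (simp add: blinfun.diff_left blinfun.diff_right)
    also have "\<dots> = binv B y - binv B0 y" using binv_props(1,2)[OF i] binv_props(2)[OF i0] by simp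
    finally show "(binv B - binv B0) y = (binv B o\<^sub>L (B0 - B) o\<^sub>L binv B0) y"
      by (simp add: blinfun.diff_left)
  qed
  have "norm (binv B - binv B0) \<le> norm (binv B) * norm (B0 - B) * ?K"
    unfolding eq by (meson norm_blinfun_compose order_trans mult_right_mono norm_ge_zero mult_mono' )
  also have "\<dots> \<le> (2 * ?K) * norm (B - B0) * ?K"
    using nb by (intro mult_right_mono) (auto simp: norm_minus_commute intro: mult_right_mono)
  finally show ?thesis by (simp add: power2_eq_square algebra_simps)
qed

lemma binv_continuous_on:
  fixes A :: "'d::metric_space \<Rightarrow> ('c::euclidean_space \<Rightarrow>\<^sub>L 'c)"
  assumes cA: "continuous_on V A" and inj: "\<And>y. y \<in> V \<Longrightarrow> inj (blinfun_apply (A y))"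
  shows "continuous_on V (\<lambda>y. binv (A y))"
  unfolding continuous_on_iff
proof (intro ballI allI impI)
  fix y0 and e :: real assume y0: "y0 \<in> V" and e: "0 < e"
  let ?K = "norm (binv (A y0))"
  define e' where "e' = min (1 / (2 * ?K + 1)) (e / (2 * ?K\<^sup>2 + 1))"
  have p1: "0 < 2 * ?K + 1" using norm_ge_zero[of "binv (A y0)"] by linarith
  have p2: "0 < 2 * ?K\<^sup>2 + 1" using zero_le_power2[of ?K] by linarith
  have e'0: "0 < e'" unfolding e'_def using e p1 p2 by simp
  obtain d where d: "d > 0" "\<And>y. y \<in> V \<Longrightarrow> dist y y0 < d \<Longrightarrow> dist (A y) (A y0) < e'"
    using cA y0 e'0 unfolding continuous_on_iff by metis
  show "\<exists>d>0. \<forall>y\<in>V. dist y y0 < d \<longrightarrow> dist (binv (A y)) (binv (A y0)) < e"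
  proof (intro exI[of _ d] conjI ballI impI d(1))
    fix y assume y: "y \<in> V" "dist y y0 < d"
    have n: "norm (A y - A y0) < e'" using d(2)[OF y] by (simp add: dist_norm)
    have "2 * ?K * norm (A y - A y0) \<le> 2 * ?K * (1 / (2 * ?K + 1))"
      using n unfolding e'_def by (intro mult_left_mono) auto
    also have "\<dots> \<le> 1" using p1 by (simp add: divide_simps)
    finally have sm: "2 * ?K * norm (A y - A y0) \<le> 1" .
    have "norm (binv (A y) - binv (A y0)) \<le> 2 * ?K\<^sup>2 * norm (A y - A y0)"
      by (rule binv_near[OF inj[OF y0] inj[OF y(1)] sm])
    also have "\<dots> \<le> 2 * ?K\<^sup>2 * (e / (2 * ?K\<^sup>2 + 1))"
      using n unfolding e'_def by (intro mult_left_mono) auto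
    also have "\<dots> < e" using e p2 by (simp add: divide_simps)
    finally show "dist (binv (A y)) (binv (A y0)) < e" by (simp add: dist_norm)
  qed
qed

lemma ift_wrap:
  fixes F :: "'c::euclidean_space \<Rightarrow> 'c" and F' :: "'c \<Rightarrow> ('c \<Rightarrow>\<^sub>L 'c)"
  assumes S: "open S" and der: "\<And>x. x \<in> S \<Longrightarrow> (F has_derivative blinfun_apply (F' x)) (at x)"
    and cont: "continuous_on S F'" and c0: "c0 \<in> S" and inj0: "inj (blinfun_apply (F' c0))"
  obtains U V g where "open U" "U \<subseteq> S" "c0 \<in> U" "open V" "F c0 \<in> V" "homeomorphism U V F g"
    "\<And>y. y \<in> V \<Longrightarrow> (g has_derivative blinfun_apply (binv (F' (g y)))) (at y)"
    "\<And>y. y \<in> V \<Longrightarrow> inj (blinfun_apply (F' (g y)))"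
proof -
  have "binv (F' c0) o\<^sub>L F' c0 = id_blinfun"
    by (rule blinfun_eqI) (simp add: binv_props(1)[OF inj0])
  from inverse_function_theorem[OF S der cont c0 this]
  obtain U V g g' where UV: "open U" "U \<subseteq> S" "c0 \<in> U" "open V" "F c0 \<in> V" "homeomorphism U V F g"
    and dg: "\<And>y. y \<in> V \<Longrightarrow> (g has_derivative (g' y)) (at y)"
    and g': "\<And>y. y \<in> V \<Longrightarrow> g' y = inv (blinfun_apply (F'(g y)))"
    and bij: "\<And>y. y \<in> V \<Longrightarrow> bij (blinfun_apply (F'(g y)))" by blast
  have ij: "\<And>y. y \<in> V \<Longrightarrow> inj (blinfun_apply (F' (g y)))" using bij bij_is_inj by blast
  show ?thesis
  proof (rule that[OF UV])
    fix y assume y: "y \<in> V"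
    show "(g has_derivative blinfun_apply (binv (F' (g y)))) (at y)"
      using dg[OF y] g'[OF y] binv_props(3)[OF ij[OF y]] by simp
    show "inj (blinfun_apply (F' (g y)))" using ij[OF y] .
  qed
qed


locale Setting =
  fixes f :: "'a::euclidean_space \<Rightarrow> ereal" and fhat :: "'a \<Rightarrow> real" and \<Phi> :: "'a \<Rightarrow> 'b::euclidean_space"
    and M U :: "'a set" and xb vb :: 'a
    and Df :: "'a \<Rightarrow> ('a \<Rightarrow>\<^sub>L real)" and D2f :: "'a \<Rightarrow> ('a \<Rightarrow>\<^sub>L ('a \<Rightarrow>\<^sub>L real))"
    and DP :: "'a \<Rightarrow> ('a \<Rightarrow>\<^sub>L 'b)" and D2P :: "'a \<Rightarrow> ('a \<Rightarrow>\<^sub>L ('a \<Rightarrow>\<^sub>L 'b))"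
    and \<epsilon> \<rho> :: real
  assumes U: "open U" "xb \<in> U" "xb \<in> M"
    and MU: "M \<inter> U = {x \<in> U. \<Phi> x = 0}"
    and fM: "\<And>x. x \<in> M \<inter> U \<Longrightarrow> f x = ereal (fhat x)"
    and dfh: "\<And>x. x \<in> U \<Longrightarrow> (fhat has_derivative blinfun_apply (Df x)) (at x)"
    and d2fh: "\<And>x. x \<in> U \<Longrightarrow> (Df has_derivative blinfun_apply (D2f x)) (at x)"
    and cD2f: "continuous_on U D2f"
    and dP: "\<And>x. x \<in> U \<Longrightarrow> (\<Phi> has_derivative blinfun_apply (DP x)) (at x)"
    and d2P: "\<And>x. x \<in> U \<Longrightarrow> (DP has_derivative blinfun_apply (D2P x)) (at x)"
    and cD2P: "continuous_on U D2P"
    and surj0: "surj (blinfun_apply (DP xb))"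
    and eps: "\<epsilon> > 0" "\<rho> \<ge> 0"
    and preg: "\<And>x' v' u. dist (x', v') (xb, vb) \<le> \<epsilon> \<Longrightarrow> v' \<in> lim_subdiff f x' \<Longrightarrow>
        f x' \<le> f xb + ereal \<epsilon> \<Longrightarrow> dist u xb \<le> \<epsilon> \<Longrightarrow>
           f u \<ge> f x' + ereal (v' \<bullet> (u - x') - \<rho> / 2 * (norm (u - x'))\<^sup>2)"
    and vb0: "vb \<in> lim_subdiff f xb"
    and ri: "vb \<in> rel_interior (lim_subdiff f xb)"
    and normals: "range (adjoint (blinfun_apply (DP xb))) = par (lim_subdiff f xb)"
    and innerlim: "inner_lim_within M (lim_subdiff f) xb = lim_subdiff f xb"
    and pb: "\<exists>\<alpha>::real. \<exists>c::real. \<forall>x. f x + ereal (\<alpha> * (norm x)\<^sup>2) \<ge> ereal c"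
begin

definition "gradf x = (\<Sum>b\<in>Basis. Df x b *\<^sub>R b)"
definition "Ad x \<nu> = (\<Sum>b\<in>Basis. (\<nu> \<bullet> DP x b) *\<^sub>R b)"
definition "G x \<mu> = gradf x + Ad x \<mu>"
definition "Hf x \<mu> h = (\<Sum>b\<in>Basis. D2f x h b *\<^sub>R b) + (\<Sum>b\<in>Basis. (\<mu> \<bullet> D2P x h b) *\<^sub>R b)"
definition "Q x v = (\<forall>u. dist u xb \<le> \<epsilon> \<longrightarrow> f u \<ge> f x + ereal (v \<bullet> (u - x) - \<rho> / 2 * (norm (u - x))\<^sup>2))"

lemma linDP: "linear (blinfun_apply (DP x))"
  using blinfun.bounded_linear_right bounded_linear.linear by blast

lemma Ad_adjoint: "Ad x = adjoint (blinfun_apply (DP x))"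
  by (rule ext) (simp add: Ad_def adjoint_formula[OF linDP])

lemma Ad_inner: "Ad x \<nu> \<bullet> h = \<nu> \<bullet> DP x h"
  unfolding Ad_adjoint using adjoint_clauses(2)[OF linDP] by simp

lemma fd_Phi: "x \<in> U \<Longrightarrow> frechet_derivative \<Phi> (at x) = blinfun_apply (DP x)"
  using dP frechet_derivative_at by metis

lemma tangent_eq: "x \<in> U \<Longrightarrow> tangent_sp \<Phi> x = {h. DP x h = 0}"
  unfolding tangent_sp_def using fd_Phi by simp

lemma lagr_deriv: "x \<in> U \<Longrightarrow> ((\<lambda>u. lagr fhat \<Phi> u \<mu>) has_derivative (\<lambda>h. Df x h + \<mu> \<bullet> DP x h)) (at x)"
  unfolding lagr_def
  by (auto intro!: derivative_eq_intros dfh dP)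

lemma grad_lagr: "x \<in> U \<Longrightarrow> grad (\<lambda>u. lagr fhat \<Phi> u \<mu>) x = G x \<mu>"
proof -
  assume x: "x \<in> U"
  have "frechet_derivative (\<lambda>u. lagr fhat \<Phi> u \<mu>) (at x) = (\<lambda>h. Df x h + \<mu> \<bullet> DP x h)"
    using lagr_deriv[OF x] frechet_derivative_at by metis
  then show ?thesis
    unfolding grad_def G_def gradf_def Ad_def by (simp add: scaleR_add_left sum.distrib)
qed

lemma Df_comp_deriv: "x \<in> U \<Longrightarrow> ((\<lambda>u. Df u b) has_derivative (\<lambda>h. D2f x h b)) (at x)"
  using blinfun.FDERIV[OF d2fh has_derivative_const, of x b] by simp

lemma DP_comp_deriv: "x \<in> U \<Longrightarrow> ((\<lambda>u. DP u b) has_derivative (\<lambda>h. D2P x h b)) (at x)"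
  using blinfun.FDERIV[OF d2P has_derivative_const, of x b] by simp

lemma G_deriv_joint:
  assumes x: "fst p \<in> U"
  shows "((\<lambda>q. G (fst q) (snd q)) has_derivative (\<lambda>q. Hf (fst p) (snd p) (fst q) + Ad (fst p) (snd q))) (at p)"
proof -
  have d1: "((\<lambda>q. Df (fst q) b) has_derivative (\<lambda>q. D2f (fst p) (fst q) b)) (at p)" for b
    using has_derivative_compose[OF has_derivative_fst[OF has_derivative_ident] Df_comp_deriv[OF x, of b]]
    by (simp add: o_def)
  have d2: "((\<lambda>q. DP (fst q) b) has_derivative (\<lambda>q. D2P (fst p) (fst q) b)) (at p)" for b
    using has_derivative_compose[OF has_derivative_fst[OF has_derivative_ident] DP_comp_deriv[OF x, of b]]
    by (simp add: o_def)
  have "((\<lambda>q. (\<Sum>b\<in>Basis. Df (fst q) b *\<^sub>R b) + (\<Sum>b\<in>Basis. (snd q \<bullet> DP (fst q) b) *\<^sub>R b)) has_derivative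
     (\<lambda>h. (\<Sum>b\<in>Basis. D2f (fst p) (fst h) b *\<^sub>R b) + (\<Sum>b\<in>Basis. (snd p \<bullet> D2P (fst p) (fst h) b + snd h \<bullet> DP (fst p) b) *\<^sub>R b))) (at p)"
    by (intro has_derivative_add has_derivative_sum has_derivative_scaleR_left d1 has_derivative_inner[OF has_derivative_snd[OF has_derivative_ident] d2, simplified])
  then show ?thesis
    unfolding G_def gradf_def Ad_def Hf_def
    by (simp add: scaleR_add_left sum.distrib algebra_simps)
qed

lemma G_deriv:
  assumes x: "x \<in> U"
  shows "((\<lambda>u. G u \<mu>) has_derivative Hf x \<mu>) (at x)"
proof -
  have "((\<lambda>u. G u \<mu>) has_derivative (\<lambda>h. Hf x \<mu> h + Ad x 0)) (at x)"
    using has_derivative_compose[OF has_derivative_Pair[OF has_derivative_ident has_derivative_const] G_deriv_joint[of "(x,\<mu>)"]] x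
    by (simp add: o_def)
  moreover have "Ad x 0 = 0" by (simp add: Ad_def)
  ultimately show ?thesis by (simp add: o_def)
qed

lemma hess_lagr:
  assumes x: "x \<in> U"
  shows "hess (\<lambda>u. lagr fhat \<Phi> u \<mu>) x = Hf x \<mu>"
proof -
  have "((\<lambda>u. grad (\<lambda>u. lagr fhat \<Phi> u \<mu>) u) has_derivative Hf x \<mu>) (at x)"
    by (rule has_derivative_transform_within_open[OF G_deriv[OF x] U(1) x]) (simp add: grad_lagr)
  then show ?thesis unfolding hess_def using frechet_derivative_at by metis
qed

lemma Hf_linear: "x \<in> U \<Longrightarrow> bounded_linear (Hf x \<mu>)"
  using G_deriv has_derivative_bounded_linear by blast

lemma Ad_linear: "bounded_linear (Ad x)"
  unfolding Ad_def by (intro bounded_linear_intros)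

lemma cont_DP: "continuous_on U DP"
  using d2P has_derivative_continuous continuous_at_imp_continuous_on by blast

lemma cont_Df: "continuous_on U Df"
  using d2fh has_derivative_continuous continuous_at_imp_continuous_on by blast

lemma cont_fhat: "continuous_on U fhat"
  using dfh has_derivative_continuous continuous_at_imp_continuous_on by blast

lemma cont_Phi: "continuous_on U \<Phi>"
  using dP has_derivative_continuous continuous_at_imp_continuous_on by blast

lemma cont_Hf: "continuous_on (U \<times> UNIV) (\<lambda>p. Hf (fst p) (snd p) h)"
proof -
  have c1: "continuous_on (U \<times> UNIV) (\<lambda>p. D2f (fst p))"
    by (rule continuous_on_compose2[OF cD2f continuous_on_fst[OF continuous_on_id]]) auto
  have c2: "continuous_on (U \<times> UNIV) (\<lambda>p. D2P (fst p))"
    by (rule continuous_on_compose2[OF cD2P continuous_on_fst[OF continuous_on_id]]) auto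
  show ?thesis unfolding Hf_def
    by (intro continuous_intros c1 c2)
qed

lemma cont_Ad: "continuous_on (U \<times> UNIV) (\<lambda>p. Ad (fst p) (snd p))"
proof -
  have c1: "continuous_on (U \<times> UNIV) (\<lambda>p. DP (fst p))"
    by (rule continuous_on_compose2[OF cont_DP continuous_on_fst[OF continuous_on_id]]) auto
  show ?thesis unfolding Ad_def by (intro continuous_intros c1)
qed

lemma cont_gradf: "continuous_on U gradf"
  unfolding gradf_def by (intro continuous_intros cont_Df)

end


context Setting
begin

definition "Emap (p::'a\<times>'b) = (fst p + Ad xb (snd p), \<Phi> (fst p))"
definition "Efun (p::'a\<times>'b) (q::'a\<times>'b) = (fst q + Ad xb (snd q), DP (fst p) (fst q))"
definition "Ed p = Blinfun (Efun p)"

lemma Emap_deriv: "fst p \<in> U \<Longrightarrow> (Emap has_derivative Efun p) (at p)"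
proof -
  assume p: "fst p \<in> U"
  have a: "((\<lambda>q. Ad xb (snd q)) has_derivative (\<lambda>q. Ad xb (snd q))) (at p)"
    using bounded_linear.has_derivative[OF Ad_linear[of xb] has_derivative_snd[OF has_derivative_ident]] .
  have b: "((\<lambda>q. \<Phi> (fst q)) has_derivative (\<lambda>q. DP (fst p) (fst q))) (at p)"
    using has_derivative_compose[OF has_derivative_fst[OF has_derivative_ident] dP[OF p]] by (simp add: o_def)
  show ?thesis unfolding Emap_def Efun_def
    by (intro has_derivative_Pair has_derivative_add has_derivative_fst[OF has_derivative_ident] a b)
qed

lemma Ed_apply: "fst p \<in> U \<Longrightarrow> blinfun_apply (Ed p) = Efun p"
  unfolding Ed_def using Emap_deriv has_derivative_bounded_linear bounded_linear_Blinfun_apply by blast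

lemma cont_DP_fst: "continuous_on (U \<times> UNIV) (\<lambda>p. DP (fst p))"
  by (rule continuous_on_compose2[OF cont_DP continuous_on_fst[OF continuous_on_id]]) auto

lemma Ed_cont: "continuous_on (U \<times> UNIV) Ed"
proof (rule continuous_on_blinfun_componentwise)
  fix i :: "'a \<times> 'b"
  have "continuous_on (U \<times> UNIV) (\<lambda>p. Efun p i)"
    unfolding Efun_def by (intro continuous_intros cont_DP_fst)
  then show "continuous_on (U \<times> UNIV) (\<lambda>p. Ed p i)"
    by (rule continuous_on_cong[THEN iffD1, rotated 2]) (auto simp: Ed_apply)
qed

lemma Ed_inj0: "inj (blinfun_apply (Ed (xb, 0)))"
proof -
  have lin: "linear (blinfun_apply (Ed (xb, 0)))" using blinfun.bounded_linear_right bounded_linear.linear by blast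
  have "q = 0" if q: "Ed (xb, 0) q = 0" for q
  proof -
    obtain h \<nu> where hq: "q = (h, \<nu>)" by fastforce
    have e: "h + Ad xb \<nu> = 0" "DP xb h = 0" using q U(2) by (auto simp: Ed_apply Efun_def hq zero_prod_def)
    have m: "Ad xb \<nu> = - h" using e(1) by (simp add: eq_neg_iff_add_eq_0 add.commute)
    have "DP xb (Ad xb \<nu>) = 0" unfolding m using e(2) by (simp add: blinfun.minus_right)
    then have "Ad xb \<nu> \<bullet> Ad xb \<nu> = 0" using Ad_inner[of xb \<nu> "Ad xb \<nu>"] by simp
    then have "Ad xb \<nu> = 0" by simp
    then have "\<nu> = 0" using surj_adjoint_inj[OF linDP surj0] by (simp add: Ad_adjoint)
    then show ?thesis using e hq by (simp add: Ad_def zero_prod_def)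
  qed
  then show ?thesis using lin by (simp add: linear_injective_0)
qed

lemma chart:
  obtains UE VE gE where "open UE" "UE \<subseteq> U \<times> UNIV" "(xb, 0) \<in> UE" "open VE" "Emap (xb,0) \<in> VE"
    "homeomorphism UE VE Emap gE"
    "\<And>y. y \<in> VE \<Longrightarrow> (gE has_derivative blinfun_apply (binv (Ed (gE y)))) (at y)"
    "\<And>y. y \<in> VE \<Longrightarrow> inj (blinfun_apply (Ed (gE y)))"
proof -
  have S: "open (U \<times> (UNIV::'b set))" using U(1) by (simp add: open_Times)
  have der: "\<And>p. p \<in> U \<times> UNIV \<Longrightarrow> (Emap has_derivative blinfun_apply (Ed p)) (at p)"
  proof -
    fix p :: "'a \<times> 'b" assume "p \<in> U \<times> UNIV"
    then have "fst p \<in> U" by (auto simp: mem_Times_iff)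
    then show "(Emap has_derivative blinfun_apply (Ed p)) (at p)" using Emap_deriv[of p] Ed_apply[of p] by simp
  qed
  show ?thesis
    using ift_wrap[OF S der Ed_cont _ Ed_inj0] U(2) that by blast
qed

end


context Setting
begin

lemma gradf_inner: "gradf x \<bullet> h = Df x h"
proof -
  have "gradf x \<bullet> h = (\<Sum>b\<in>Basis. Df x b * (b \<bullet> h))"
    unfolding gradf_def by (simp add: inner_sum_left)
  also have "\<dots> = Df x (\<Sum>b\<in>Basis. (h \<bullet> b) *\<^sub>R b)"
    by (simp add: blinfun.sum_right blinfun.scaleR_right inner_commute mult.commute)
  also have "\<dots> = Df x h" by (simp add: euclidean_representation)
  finally show ?thesis .
qed

lemma first_order:
  "\<exists>\<delta>1>0. \<forall>x v h. x \<in> M \<inter> U \<and> dist x xb < \<delta>1 \<and> Q x v \<and> DP x h = 0 \<longrightarrow> (v - gradf x) \<bullet> h = 0"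
proof -
  obtain UE VE gE where UE: "open UE" "UE \<subseteq> U \<times> UNIV" "(xb, 0) \<in> UE" and VE: "open VE"
    and hom: "homeomorphism UE VE Emap gE"
    and dg: "\<And>y. y \<in> VE \<Longrightarrow> (gE has_derivative blinfun_apply (binv (Ed (gE y)))) (at y)"
    and ij: "\<And>y. y \<in> VE \<Longrightarrow> inj (blinfun_apply (Ed (gE y)))"
    by (rule chart) blast
  obtain d0 where d0: "d0 > 0" "ball (xb, 0) d0 \<subseteq> UE" using UE(1,3) open_contains_ball by blast
  define \<delta>1 where "\<delta>1 = min d0 \<epsilon>"
  have \<delta>1: "\<delta>1 > 0" using d0 eps by (simp add: \<delta>1_def)
  show ?thesis
  proof (intro exI[of _ \<delta>1] conjI \<delta>1 allI impI)
    fix x v h assume asm: "x \<in> M \<inter> U \<and> dist x xb < \<delta>1 \<and> Q x v \<and> DP x h = 0"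
    then have xM: "x \<in> M \<inter> U" and xd: "dist x xb < \<delta>1" and Qxv: "Q x v" and hT: "DP x h = 0" by auto
    have xU: "x \<in> U" using xM by auto
    have Px: "\<Phi> x = 0" using xM MU by auto
    have "dist (x, 0::'b) (xb, 0) < d0" using xd by (simp add: dist_Pair_Pair \<delta>1_def)
    then have x0UE: "(x, 0::'b) \<in> UE" using d0 by (auto simp: dist_commute)
    have Ex0: "Emap (x, 0) = (x, 0)" by (simp add: Emap_def Px Ad_def)
    have x0VE: "(x, 0::'b) \<in> VE" and gx0: "gE (x, 0) = (x, 0)"
      using hom x0UE Ex0 unfolding homeomorphism_def by (metis image_eqI)+
    define lin where "lin t = (x + t *\<^sub>R h, 0::'b)" for t :: real
    have l0: "lin 0 = (x, 0)" by (simp add: lin_def)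
    have dl: "(lin has_derivative (\<lambda>t. t *\<^sub>R (h, 0::'b))) (at 0)"
      unfolding lin_def by (auto intro!: derivative_eq_intros simp: zero_prod_def)
    have Ed0: "Ed (x, 0) (h, 0) = (h, 0)" using xU by (simp add: Ed_apply Efun_def hT Ad_def)
    have binvh: "binv (Ed (x, 0)) (h, 0) = (h, 0)"
      using binv_props(1)[OF ij[OF x0VE, unfolded gx0], of "(h,0)"] Ed0 by simp
    define c where "c = gE \<circ> lin"
    have dc: "(c has_derivative (\<lambda>t. t *\<^sub>R (h, 0::'b))) (at 0)"
    proof -
      have "(c has_derivative (blinfun_apply (binv (Ed (x, 0))) \<circ> (\<lambda>t. t *\<^sub>R (h, 0::'b)))) (at 0)"
        unfolding c_def using has_derivative_compose[OF dl, of gE "blinfun_apply (binv (Ed (x, 0)))"] dg[OF x0VE] gx0 l0 by (simp add: o_def)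
      moreover have "blinfun_apply (binv (Ed (x, 0))) \<circ> (\<lambda>t. t *\<^sub>R (h, 0::'b)) = (\<lambda>t. t *\<^sub>R (h, 0))"
        by (rule ext) (metis binvh blinfun.scaleR_right scaleR_Pair scaleR_zero_right o_apply)
      ultimately show ?thesis by simp
    qed
    define \<gamma> where "\<gamma> t = fst (c t)" for t
    have c0: "c 0 = (x, 0)" by (simp add: c_def l0 gx0)
    have g0: "\<gamma> 0 = x" by (simp add: \<gamma>_def c0)
    have dga: "(\<gamma> has_derivative (\<lambda>t. t *\<^sub>R h)) (at 0)"
      unfolding \<gamma>_def using has_derivative_fst[OF dc] by simp
    have cga: "isCont \<gamma> 0" using dga has_derivative_continuous by blast
    have ev1: "eventually (\<lambda>t. lin t \<in> VE) (at 0)"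
    proof -
      have "isCont lin 0" using dl has_derivative_continuous by blast
      then have "(lin \<longlongrightarrow> lin 0) (at 0)" by (simp add: isCont_def)
      then show ?thesis using topological_tendstoD[OF _ VE] x0VE l0 by simp
    qed
    have ev2: "eventually (\<lambda>t. \<gamma> t \<in> ball xb \<epsilon>) (at 0)"
    proof -
      have "(\<gamma> \<longlongrightarrow> \<gamma> 0) (at 0)" using cga by (simp add: isCont_def)
      moreover have "\<gamma> 0 \<in> ball xb \<epsilon>" using g0 xd by (simp add: \<delta>1_def dist_commute)
      ultimately show ?thesis using topological_tendstoD[OF _ open_ball] by blast
    qed
    define \<phi> where "\<phi> t = fhat (\<gamma> t) - v \<bullet> \<gamma> t + \<rho> / 2 * ((\<gamma> t - x) \<bullet> (\<gamma> t - x))" for t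
    have ev3: "eventually (\<lambda>t. \<phi> 0 \<le> \<phi> t) (at 0)"
      using ev1 ev2
    proof eventually_elim
      case (elim t)
      have cUE: "c t \<in> UE" using hom elim(1) unfolding homeomorphism_def c_def by auto
      have Ec: "Emap (c t) = lin t" using hom elim(1) unfolding homeomorphism_def c_def by auto
      have gU: "\<gamma> t \<in> U" using cUE UE(2) by (auto simp: \<gamma>_def mem_Times_iff)
      have "\<Phi> (\<gamma> t) = 0" using Ec by (simp add: Emap_def lin_def \<gamma>_def prod_eq_iff)
      then have gM: "\<gamma> t \<in> M \<inter> U" using gU MU by auto
      have "dist (\<gamma> t) xb \<le> \<epsilon>" using elim(2) by (simp add: dist_commute)
      then have "f (\<gamma> t) \<ge> f x + ereal (v \<bullet> (\<gamma> t - x) - \<rho> / 2 * (norm (\<gamma> t - x))\<^sup>2)"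
        using Qxv unfolding Q_def by blast
      then have "fhat (\<gamma> t) \<ge> fhat x + (v \<bullet> (\<gamma> t - x) - \<rho> / 2 * (norm (\<gamma> t - x))\<^sup>2)"
        using fM[OF gM] fM[OF xM] by simp
      then show ?case unfolding \<phi>_def g0 by (simp add: power2_norm_eq_inner inner_diff_right algebra_simps)
    qed
    then obtain d where d: "d > 0" "\<And>t. t \<noteq> 0 \<Longrightarrow> dist t 0 < d \<Longrightarrow> \<phi> 0 \<le> \<phi> t"
      unfolding eventually_at by blast
    have dphi: "(\<phi> has_derivative (\<lambda>t. t * (Df x h - v \<bullet> h))) (at 0)"
    proof -
      have df: "((\<lambda>t. fhat (\<gamma> t)) has_derivative (\<lambda>t. Df x (t *\<^sub>R h))) (at 0)"
        using has_derivative_compose[OF dga, of fhat] dfh[OF xU] g0 by (simp add: o_def)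
      have "(\<phi> has_derivative (\<lambda>t. Df x (t *\<^sub>R h) - v \<bullet> (t *\<^sub>R h) + \<rho> / 2 * ((\<gamma> 0 - x) \<bullet> (t *\<^sub>R h) + (t *\<^sub>R h) \<bullet> (\<gamma> 0 - x)))) (at 0)"
      proof -
        have a1: "((\<lambda>t. v \<bullet> \<gamma> t) has_derivative (\<lambda>t. v \<bullet> (t *\<^sub>R h))) (at 0)"
          by (rule has_derivative_inner_right[OF dga])
        have a2: "((\<lambda>t. \<gamma> t - x) has_derivative (\<lambda>t. t *\<^sub>R h)) (at 0)"
          using has_derivative_diff[OF dga has_derivative_const[of x]] by simp
        have a3: "((\<lambda>t. (\<gamma> t - x) \<bullet> (\<gamma> t - x)) has_derivative (\<lambda>t. (\<gamma> 0 - x) \<bullet> (t *\<^sub>R h) + (t *\<^sub>R h) \<bullet> (\<gamma> 0 - x))) (at 0)"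
          using has_derivative_inner[OF a2 a2] by simp
        have a4: "((\<lambda>t. \<rho> / 2 * ((\<gamma> t - x) \<bullet> (\<gamma> t - x))) has_derivative (\<lambda>t. \<rho> / 2 * ((\<gamma> 0 - x) \<bullet> (t *\<^sub>R h) + (t *\<^sub>R h) \<bullet> (\<gamma> 0 - x)))) (at 0)"
          by (rule has_derivative_mult_right[OF a3])
        show ?thesis unfolding \<phi>_def by (rule has_derivative_add[OF has_derivative_diff[OF df a1] a4])
      qed
      then show ?thesis using g0 by (simp add: blinfun.scaleR_right algebra_simps)
    qed
    moreover have "(\<lambda>t. t * (Df x h - v \<bullet> h)) = (*) (Df x h - v \<bullet> h)" by (rule ext) (simp add: mult.commute)
    ultimately have "DERIV \<phi> 0 :> (Df x h - v \<bullet> h)"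
      by (simp add: has_field_derivative_def)
    moreover have "\<forall>y. \<bar>0 - y\<bar> < d \<longrightarrow> \<phi> 0 \<le> \<phi> y"
    proof (intro allI impI)
      fix y :: real assume y: "\<bar>0 - y\<bar> < d"
      show "\<phi> 0 \<le> \<phi> y"
      proof (cases "y = 0")
        case False
        then show ?thesis using d(2)[of y] y by (simp add: dist_real_def)
      qed simp
    qed
    ultimately have "Df x h - v \<bullet> h = 0" using DERIV_local_min[OF _ d(1)] by blast
    then show "(v - gradf x) \<bullet> h = 0" by (simp add: inner_diff_left gradf_inner)
  qed
qed

lemma first_order_range:
  obtains \<delta>1 where "\<delta>1 > 0" "\<And>x v. x \<in> M \<inter> U \<Longrightarrow> dist x xb < \<delta>1 \<Longrightarrow> Q x v \<Longrightarrow> v - gradf x \<in> range (Ad x)"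
proof -
  obtain \<delta>1 where d: "\<delta>1 > 0" "\<And>x v h. x \<in> M \<inter> U \<Longrightarrow> dist x xb < \<delta>1 \<Longrightarrow> Q x v \<Longrightarrow> DP x h = 0 \<Longrightarrow> (v - gradf x) \<bullet> h = 0"
    using first_order by blast
  show ?thesis
  proof (rule that[OF d(1)])
    fix x v assume "x \<in> M \<inter> U" "dist x xb < \<delta>1" "Q x v"
    then show "v - gradf x \<in> range (Ad x)"
      unfolding Ad_adjoint using ker_perp_range_adjoint[OF linDP] d(2) by blast
  qed
qed

end


lemma ereal_halfspace:
  fixes F :: ereal and w :: "'a::euclidean_space"
  shows "convex {g. F \<ge> ereal (c + g \<bullet> w)} \<and> closed {g. F \<ge> ereal (c + g \<bullet> w)}"
proof (cases F)
  case (real r)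
  have "{g. F \<ge> ereal (c + g \<bullet> w)} = {g. inner w g \<le> r - c}"
    using real by (auto simp: inner_commute)
  then show ?thesis using convex_halfspace_le closed_halfspace_le by metis
next
  case PInf
  then have "{g. F \<ge> ereal (c + g \<bullet> w)} = UNIV" by auto
  then show ?thesis by simp
next
  case MInf
  then have "{g. F \<ge> ereal (c + g \<bullet> w)} = {}" by auto
  then show ?thesis by simp
qed

lemma seq_inv_conv:
  fixes X :: "nat \<Rightarrow> 'c::metric_space"
  assumes "\<And>k. dist (X k) L < inverse (real (Suc k))"
  shows "X \<longlonglongrightarrow> L"
proof -
  have le: "eventually (\<lambda>k. dist (X k) L \<le> inverse (real (Suc k))) sequentially"
    using assms less_imp_le by (intro always_eventually) blast
  have ge: "eventually (\<lambda>k. 0 \<le> dist (X k) L) sequentially" by simp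
  have "(\<lambda>k. dist (X k) L) \<longlonglongrightarrow> 0"
    using tendsto_sandwich[OF ge le tendsto_const LIMSEQ_inverse_real_of_nat] .
  then show ?thesis using tendsto_dist_iff by blast
qed

context Setting
begin

lemma Q_cc:
  assumes xM: "x \<in> M \<inter> U"
  shows "convex {g. Q x g}" "closed {g. Q x g}"
proof -
  let ?S = "\<lambda>u. {g. f u \<ge> ereal ((fhat x - \<rho> / 2 * (norm (u - x))\<^sup>2) + g \<bullet> (u - x))}"
  have eq: "{g. Q x g} = (\<Inter>u\<in>{u. dist u xb \<le> \<epsilon>}. ?S u)"
    unfolding Q_def using fM[OF xM] by (auto simp: algebra_simps)
  show "convex {g. Q x g}" unfolding eq by (rule convex_INT) (use ereal_halfspace in blast)
  show "closed {g. Q x g}" unfolding eq by (rule closed_INT) (use ereal_halfspace in blast)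
qed

lemma Ad_scale: "Ad x (c *\<^sub>R \<eta>) = c *\<^sub>R Ad x \<eta>"
  by (simp add: Ad_def scaleR_sum_right)

lemma sep_step:
  assumes xM: "x \<in> M \<inter> U" and xd: "dist x xb < \<delta>1"
    and fo: "\<And>x v. x \<in> M \<inter> U \<Longrightarrow> dist x xb < \<delta>1 \<Longrightarrow> Q x v \<Longrightarrow> v - gradf x \<in> range (Ad x)"
    and vR: "v - gradf x \<in> range (Ad x)" and nQ: "\<not> Q x v"
  shows "\<exists>\<eta>. norm \<eta> = 1 \<and> (\<forall>g. Q x g \<longrightarrow> Ad x \<eta> \<bullet> (g - v) > 0)"
proof -
  obtain a b where ab: "a \<bullet> v < b" "\<And>g. g \<in> {g. Q x g} \<Longrightarrow> a \<bullet> g > b"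
    using separating_hyperplane_closed_point[OF Q_cc[OF xM] ] nQ by blast
  have sub: "subspace (range (Ad x))"
    using subspace_UNIV linear_subspace_image bounded_linear.linear[OF Ad_linear] by blast
  obtain n t where n: "n \<in> span (range (Ad x))" and t: "\<And>w. w \<in> span (range (Ad x)) \<Longrightarrow> orthogonal t w"
    and a: "a = n + t" using orthogonal_subspace_decomp_exists by blast
  have nR: "n \<in> range (Ad x)" using n sub by (metis span_eq_iff)
  then obtain \<eta> where \<eta>: "n = Ad x \<eta>" by blast
  have pos: "Ad x \<eta> \<bullet> (g - v) > 0" if g: "Q x g" for g
  proof -
    have "g - gradf x \<in> range (Ad x)" using fo[OF xM xd g] .
    then have "(g - gradf x) - (v - gradf x) \<in> range (Ad x)" using vR sub subspace_diff by blast
    then have gv: "g - v \<in> range (Ad x)" by simp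
    have "t \<bullet> (g - v) = 0" using t[of "g - v"] gv span_base[of "g - v"] by (auto simp: orthogonal_def)
    moreover have "a \<bullet> (g - v) > 0" using ab(1) ab(2)[of g] g by (simp add: inner_diff_right)
    ultimately show ?thesis using a \<eta> by (simp add: inner_add_left)
  qed
  show ?thesis
  proof (cases "\<eta> = 0")
    case True
    then have "\<not> Q x g" for g using pos[of g] by (auto simp: Ad_def)
    moreover obtain e :: 'b where "norm e = 1" using vector_choose_size[of 1] by auto
    ultimately show ?thesis by blast
  next
    case False
    let ?e = "(1 / norm \<eta>) *\<^sub>R \<eta>"
    have "norm ?e = 1" using False by simp
    moreover have "Ad x ?e \<bullet> (g - v) > 0" if "Q x g" for g
      using pos[OF that] False by (simp add: Ad_scale)
    ultimately show ?thesis by blast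
  qed
qed

lemma uniform_Q:
  "\<exists>\<delta>>0. \<forall>x v. x \<in> M \<inter> U \<and> dist x xb < \<delta> \<and> dist v vb < \<delta> \<and> v - gradf x \<in> range (Ad x) \<longrightarrow> Q x v"
proof (rule ccontr)
  assume H: "\<not> ?thesis"
  obtain \<delta>1 where \<delta>1: "\<delta>1 > 0" and fo: "\<And>x v. x \<in> M \<inter> U \<Longrightarrow> dist x xb < \<delta>1 \<Longrightarrow> Q x v \<Longrightarrow> v - gradf x \<in> range (Ad x)"
    using first_order_range by blast
  have "\<forall>k. \<exists>p. fst p \<in> M \<inter> U \<and> dist (fst p) xb < min \<delta>1 (inverse (real (Suc k))) \<and>
      dist (snd p) vb < min \<delta>1 (inverse (real (Suc k))) \<and> snd p - gradf (fst p) \<in> range (Ad (fst p)) \<and> \<not> Q (fst p) (snd p)"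
  proof
    fix k
    have pos: "min \<delta>1 (inverse (real (Suc k))) > 0" using \<delta>1 by simp
    from H have "\<forall>\<delta>>0. \<exists>x v. x \<in> M \<inter> U \<and> dist x xb < \<delta> \<and> dist v vb < \<delta> \<and> v - gradf x \<in> range (Ad x) \<and> \<not> Q x v"
      by blast
    then obtain x v where "x \<in> M \<inter> U" "dist x xb < min \<delta>1 (inverse (real (Suc k)))"
      "dist v vb < min \<delta>1 (inverse (real (Suc k)))" "v - gradf x \<in> range (Ad x)" "\<not> Q x v"
      using pos by blast
    then show "\<exists>p. fst p \<in> M \<inter> U \<and> dist (fst p) xb < min \<delta>1 (inverse (real (Suc k))) \<and>
      dist (snd p) vb < min \<delta>1 (inverse (real (Suc k))) \<and> snd p - gradf (fst p) \<in> range (Ad (fst p)) \<and> \<not> Q (fst p) (snd p)"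
      by (intro exI[of _ "(x, v)"]) simp
  qed
  then obtain XV where XV: "\<And>k. fst (XV k) \<in> M \<inter> U \<and> dist (fst (XV k)) xb < min \<delta>1 (inverse (real (Suc k))) \<and>
      dist (snd (XV k)) vb < min \<delta>1 (inverse (real (Suc k))) \<and> snd (XV k) - gradf (fst (XV k)) \<in> range (Ad (fst (XV k))) \<and> \<not> Q (fst (XV k)) (snd (XV k))"
    by metis
  define xs where "xs k = fst (XV k)" for k
  define vs where "vs k = snd (XV k)" for k
  have xsM: "xs k \<in> M \<inter> U" for k using XV unfolding xs_def by blast
  have xsd: "dist (xs k) xb < \<delta>1" for k using XV[of k] unfolding xs_def by simp
  have xs_lim: "xs \<longlonglongrightarrow> xb" by (rule seq_inv_conv) (use XV in \<open>auto simp: xs_def\<close>)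
  have vs_lim: "vs \<longlonglongrightarrow> vb" by (rule seq_inv_conv) (use XV in \<open>auto simp: vs_def\<close>)
  have "\<forall>k. \<exists>\<eta>. norm \<eta> = 1 \<and> (\<forall>g. Q (xs k) g \<longrightarrow> Ad (xs k) \<eta> \<bullet> (g - vs k) > 0)"
  proof
    fix k
    show "\<exists>\<eta>. norm \<eta> = 1 \<and> (\<forall>g. Q (xs k) g \<longrightarrow> Ad (xs k) \<eta> \<bullet> (g - vs k) > 0)"
      by (rule sep_step[OF xsM xsd fo]) (use XV[of k] in \<open>auto simp: xs_def vs_def\<close>)
  qed
  then obtain \<eta>s where \<eta>s: "\<And>k. norm (\<eta>s k) = 1" "\<And>k g. Q (xs k) g \<Longrightarrow> Ad (xs k) (\<eta>s k) \<bullet> (g - vs k) > 0"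
    by metis
  have "seq_compact (sphere (0::'b) 1)" by (simp add: compact_imp_seq_compact)
  then obtain l \<sigma> where l: "l \<in> sphere (0::'b) 1" and \<sigma>: "strict_mono \<sigma>" and \<eta>lim: "(\<eta>s \<circ> \<sigma>) \<longlonglongrightarrow> l"
    using seq_compactE[of "sphere 0 1" \<eta>s] \<eta>s(1) by auto
  define X where "X = xs \<circ> \<sigma>"
  have Xlim: "X \<longlonglongrightarrow> xb" unfolding X_def using LIMSEQ_subseq_LIMSEQ[OF xs_lim \<sigma>] .
  have XM: "X k \<in> M" "X k \<in> U" for k using xsM by (auto simp: X_def)
  define Y where "Y k = Ad (X k) (\<eta>s (\<sigma> k))" for k
  define y where "y = Ad xb l"
  have Ylim: "Y \<longlonglongrightarrow> y"
  proof -
    have P: "((\<lambda>k. (X k, (\<eta>s \<circ> \<sigma>) k)) \<longlonglongrightarrow> (xb, l))" using Xlim \<eta>lim by (rule tendsto_Pair)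
    have Yeq: "Y = (\<lambda>k. Ad (X k) (\<eta>s (\<sigma> k)))" by (simp add: Y_def fun_eq_iff)
    from continuous_on_tendsto_compose[OF cont_Ad P] show ?thesis
      using U(2) XM(2) unfolding Yeq by (simp add: y_def mem_Times_iff)
  qed
  have l0: "l \<noteq> 0" using l by auto
  have y0: "y \<noteq> 0" using surj_adjoint_inj[OF linDP surj0, of l] l0 by (auto simp: y_def Ad_adjoint)
  obtain e where e: "e > 0" "ball vb e \<inter> affine hull (lim_subdiff f xb) \<subseteq> lim_subdiff f xb"
    using ri by (auto simp: mem_rel_interior_ball)
  have "y \<in> par (lim_subdiff f xb)" using normals by (auto simp: y_def Ad_adjoint)
  then obtain a1 b1 where ab1: "y = a1 - b1" "a1 \<in> affine hull (lim_subdiff f xb)" "b1 \<in> affine hull (lim_subdiff f xb)"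
    unfolding par_def by blast
  define s where "s = min (e / 2) (\<epsilon> / 4)"
  have s0: "s > 0" using e eps by (simp add: s_def)
  define t where "t = s / norm y"
  have t0: "t > 0" using s0 y0 by (simp add: t_def)
  define a where "a = vb - t *\<^sub>R y"
  have vbC: "vb \<in> affine hull (lim_subdiff f xb)" using vb0 by (rule hull_inc)
  have "a = vb + t *\<^sub>R (b1 - a1)" unfolding a_def ab1(1) by (simp add: scaleR_diff_right)
  then have aaff: "a \<in> affine hull (lim_subdiff f xb)"
    using mem_affine_3_minus[OF affine_affine_hull vbC ab1(3) ab1(2)] by simp
  have "dist a vb = norm (t *\<^sub>R y)" by (simp add: a_def dist_norm)
  also have "\<dots> = t * norm y" using t0 by simp
  also have "\<dots> = s" using y0 by (simp add: t_def)
  finally have dav: "dist a vb = s" .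
  have "a \<in> ball vb e" using dav s0 e by (simp add: s_def dist_commute)
  then have aC: "a \<in> lim_subdiff f xb" using e aaff by blast
  then have "a \<in> inner_lim_within M (lim_subdiff f) xb" using innerlim by simp
  then obtain ws k0 where ws: "\<And>k. k \<ge> k0 \<Longrightarrow> ws k \<in> lim_subdiff f (X k)" and wslim: "ws \<longlonglongrightarrow> a"
    unfolding inner_lim_within_def using XM(1) Xlim by blast
  have ev1: "eventually (\<lambda>k. dist (X k, ws k) (xb, vb) < \<epsilon>) sequentially"
  proof -
    have "(\<lambda>k. dist (X k, ws k) (xb, vb)) \<longlonglongrightarrow> dist (xb, a) (xb, vb)"
      by (intro tendsto_intros Xlim wslim)
    moreover have "dist (xb, a) (xb, vb) < \<epsilon>" using dav eps s0 unfolding s_def by (simp add: dist_Pair_Pair)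
    ultimately show ?thesis using order_tendstoD(2) by blast
  qed
  have ev2: "eventually (\<lambda>k. fhat (X k) < fhat xb + \<epsilon>) sequentially"
  proof -
    have "(\<lambda>k. fhat (X k)) \<longlonglongrightarrow> fhat xb"
      using continuous_on_tendsto_compose[OF cont_fhat Xlim U(2)] XM(2) by simp
    moreover have "fhat xb < fhat xb + \<epsilon>" using eps by simp
    ultimately show ?thesis by (rule order_tendstoD(2))
  qed
  have ev3: "eventually (\<lambda>k. k \<ge> k0) sequentially" by (rule eventually_ge_at_top)
  have ev4: "eventually (\<lambda>k. Y k \<bullet> (ws k - (vs \<circ> \<sigma>) k) > 0) sequentially"
    using ev1 ev2 ev3
  proof eventually_elim
    case (elim k)
    have xMU: "X k \<in> M \<inter> U" using XM by auto
    have fx: "f (X k) \<le> f xb + ereal \<epsilon>" using elim(2) fM[OF xMU] fM[of xb] U by simp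
    have "Q (X k) (ws k)" unfolding Q_def
      using preg[OF _ ws[OF elim(3)] fx] elim(1) by (simp add: less_imp_le)
    then show ?case using \<eta>s(2)[of "\<sigma> k" "ws k"] by (simp add: Y_def X_def)
  qed
  have "(\<lambda>k. Y k \<bullet> (ws k - (vs \<circ> \<sigma>) k)) \<longlonglongrightarrow> y \<bullet> (a - vb)"
    by (intro tendsto_intros Ylim wslim LIMSEQ_subseq_LIMSEQ[OF vs_lim \<sigma>])
  moreover have "y \<bullet> (a - vb) < 0" using t0 y0 by (simp add: a_def)
  ultimately have "eventually (\<lambda>k. Y k \<bullet> (ws k - (vs \<circ> \<sigma>) k) < 0) sequentially"
    using order_tendstoD(2) by blast
  with ev4 have "eventually (\<lambda>k. False) sequentially"
    by eventually_elim simp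
  then show False by simp
qed

end


lemma far_real:
  fixes A c K r e d nu nxb duz :: real
  assumes A: "A \<ge> 0" and e: "e > 0" and d: "d > e" and duz: "duz \<ge> d / 2" and nu: "nu \<le> nxb + d" "nu \<ge> 0"
    and nxb: "nxb \<ge> 0" and r: "r > 0" and r1: "r * (32 * A + 1) \<le> 1"
    and r2: "r * 16 * (\<bar>K - c + 2 * A * nxb\<^sup>2\<bar> + 1) < e\<^sup>2"
  shows "c - A * nu\<^sup>2 + duz\<^sup>2 / (2 * r) > K"
proof -
  have d0: "d > 0" using d e by simp
  have "nu\<^sup>2 \<le> (nxb + d)\<^sup>2" using nu nxb d0 by (simp add: power_mono)
  also have "\<dots> \<le> 2 * nxb\<^sup>2 + 2 * d\<^sup>2"
  proof -
    have "0 \<le> (nxb - d)\<^sup>2" by simp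
    then show ?thesis unfolding power2_sum power2_diff by linarith
  qed
  finally have nu2: "A * nu\<^sup>2 \<le> A * (2 * nxb\<^sup>2 + 2 * d\<^sup>2)" using A by (simp add: mult_left_mono)
  have "(d / 2)\<^sup>2 \<le> duz\<^sup>2" using duz d0 by (intro power_mono) auto
  then have du2: "d\<^sup>2 / 4 \<le> duz\<^sup>2" by (simp add: power_divide)
  have "d\<^sup>2 / (8 * r) \<le> duz\<^sup>2 / (2 * r)" using du2 r by (simp add: divide_simps)
  have e2: "e\<^sup>2 < d\<^sup>2" using e d by (simp add: power_strict_mono)
  have key: "r * (c - A * nu\<^sup>2) + duz\<^sup>2 / 2 > r * K"
  proof -
    define P where "P = r * (A * nu\<^sup>2)"
    define Q1 where "Q1 = r * (A * nxb\<^sup>2)"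
    define R where "R = r * (A * d\<^sup>2)"
    define S where "S = r * \<bar>K - c + 2 * A * nxb\<^sup>2\<bar>"
    have f1: "P \<le> 2 * Q1 + 2 * R"
    proof -
      have "r * (A * nu\<^sup>2) \<le> r * (A * (2 * nxb\<^sup>2 + 2 * d\<^sup>2))" using nu2 r by simp
      then show ?thesis unfolding P_def Q1_def R_def by (simp add: algebra_simps)
    qed
    have f2: "2 * R \<le> d\<^sup>2 / 16"
    proof -
      have "r * A * 32 \<le> 1" using r1 r by (simp add: algebra_simps)
      then have "(r * A * 32) * d\<^sup>2 \<le> 1 * d\<^sup>2" by (intro mult_right_mono) auto
      then show ?thesis unfolding R_def by (simp add: algebra_simps)
    qed
    have f3: "16 * r + 16 * S < d\<^sup>2"
      using r2 e2 unfolding S_def by (simp add: algebra_simps)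
    have f4: "r * K - r * c + 2 * Q1 \<le> S"
    proof -
      have "r * (K - c + 2 * A * nxb\<^sup>2) \<le> r * \<bar>K - c + 2 * A * nxb\<^sup>2\<bar>"
        using r by (intro mult_left_mono) auto
      then show ?thesis unfolding S_def Q1_def by (simp add: algebra_simps)
    qed
    have "P + r * K - r * c < d\<^sup>2 / 8" using f1 f2 f3 f4 r by linarith
    moreover have "d\<^sup>2 / 8 \<le> duz\<^sup>2 / 2" using du2 by simp
    ultimately show ?thesis unfolding P_def by (simp add: algebra_simps)
  qed
  have "r * K < r * (c - A * nu\<^sup>2 + duz\<^sup>2 / (2 * r))"
    using key r by (simp add: algebra_simps)
  then show ?thesis using r by simp
qed

context Setting
begin

lemma prox_unique:
  assumes xM: "x \<in> M \<inter> U" and Qxv: "Q x v" and r: "r > 0" "r * \<rho> < 1" and z: "z = x + r *\<^sub>R v"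
    and far: "\<And>u. dist u xb > \<epsilon> \<Longrightarrow> f x + ereal ((norm (x - z))\<^sup>2 / (2 * r)) < f u + ereal ((norm (u - z))\<^sup>2 / (2 * r))"
  shows "prox r f z = {x}"
proof -
  have fx: "f x = ereal (fhat x)" using fM[OF xM] .
  have strict: "f x + ereal ((norm (x - z))\<^sup>2 / (2 * r)) < f u + ereal ((norm (u - z))\<^sup>2 / (2 * r))" if ux: "u \<noteq> x" for u
  proof (cases "dist u xb \<le> \<epsilon>")
    case False
    then show ?thesis using far by simp
  next
    case True
    have lb: "f u \<ge> ereal (fhat x + (v \<bullet> (u - x) - \<rho> / 2 * (norm (u - x))\<^sup>2))"
      using Qxv True fx unfolding Q_def by simp
    have "norm (x - z) = r * norm v" using r(1) by (simp add: z)
    then have xz: "(norm (x - z))\<^sup>2 = r\<^sup>2 * (v \<bullet> v)" by (simp add: power_mult_distrib power2_norm_eq_inner)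
    have uz: "(norm (u - z))\<^sup>2 = (norm (u - x))\<^sup>2 - 2 * r * (v \<bullet> (u - x)) + r\<^sup>2 * (v \<bullet> v)"
    proof -
      have e: "u - z = (u - x) - r *\<^sub>R v" by (simp add: z)
      show ?thesis unfolding e power2_norm_eq_inner
        by (simp add: inner_diff_left inner_diff_right inner_commute power2_eq_square algebra_simps)
    qed
    have pos: "(norm (u - x))\<^sup>2 > 0" using ux by simp
    have c: "(1 - r * \<rho>) * (norm (u - x))\<^sup>2 > 0" using pos r(2) by simp
    have rineq: "fhat x + r\<^sup>2 * (v \<bullet> v) / (2 * r) < (fhat x + (v \<bullet> (u - x) - \<rho> / 2 * (norm (u - x))\<^sup>2)) + ((norm (u - x))\<^sup>2 - 2 * r * (v \<bullet> (u - x)) + r\<^sup>2 * (v \<bullet> v)) / (2 * r)"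
      using c r(1) by (simp add: field_simps power2_eq_square)
    show ?thesis
    proof (cases "f u")
      case (real y)
      then show ?thesis using lb rineq unfolding fx xz uz by simp
    next
      case PInf
      then show ?thesis unfolding fx by simp
    next
      case MInf
      then show ?thesis using lb by simp
    qed
  qed
  have xin: "x \<in> prox r f z" unfolding prox_def
  proof (intro CollectI allI)
    fix u show "f x + ereal ((norm (x - z))\<^sup>2 / (2 * r)) \<le> f u + ereal ((norm (u - z))\<^sup>2 / (2 * r))"
      using strict[of u] by (cases "u = x") auto
  qed
  have "w = x" if w: "w \<in> prox r f z" for w
  proof (rule ccontr)
    assume "w \<noteq> x"
    then have "f x + ereal ((norm (x - z))\<^sup>2 / (2 * r)) < f w + ereal ((norm (w - z))\<^sup>2 / (2 * r))" by (rule strict)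
    moreover have "f w + ereal ((norm (w - z))\<^sup>2 / (2 * r)) \<le> f x + ereal ((norm (x - z))\<^sup>2 / (2 * r))"
      using w unfolding prox_def by blast
    ultimately show False by simp
  qed
  then show ?thesis using xin by blast
qed

end


context Setting
begin

definition "Fmap r (p::'a\<times>'b) = (fst p + r *\<^sub>R G (fst p) (snd p), \<Phi> (fst p))"
definition "Ffun r (p::'a\<times>'b) (q::'a\<times>'b) = (fst q + r *\<^sub>R (Hf (fst p) (snd p) (fst q) + Ad (fst p) (snd q)), DP (fst p) (fst q))"
definition "Fd r p = Blinfun (Ffun r p)"

lemma Fmap_deriv: "fst p \<in> U \<Longrightarrow> (Fmap r has_derivative Ffun r p) (at p)"
proof -
  assume p: "fst p \<in> U"
  have a: "((\<lambda>q. fst q + r *\<^sub>R G (fst q) (snd q)) has_derivative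
      (\<lambda>q. fst q + r *\<^sub>R (Hf (fst p) (snd p) (fst q) + Ad (fst p) (snd q)))) (at p)"
    by (intro has_derivative_add has_derivative_fst[OF has_derivative_ident] has_derivative_scaleR_right G_deriv_joint p)
  have b: "((\<lambda>q. \<Phi> (fst q)) has_derivative (\<lambda>q. DP (fst p) (fst q))) (at p)"
    using has_derivative_compose[OF has_derivative_fst[OF has_derivative_ident] dP[OF p]] by (simp add: o_def)
  show ?thesis unfolding Fmap_def Ffun_def
    by (rule has_derivative_Pair[OF a b])
qed

lemma Fd_apply: "fst p \<in> U \<Longrightarrow> blinfun_apply (Fd r p) = Ffun r p"
  unfolding Fd_def using Fmap_deriv has_derivative_bounded_linear bounded_linear_Blinfun_apply by blast

lemma cont_Ad_const: "continuous_on (U \<times> UNIV) (\<lambda>p::'a\<times>'b. Ad (fst p) c)"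
  unfolding Ad_def by (intro continuous_intros cont_DP_fst)

lemma Fd_cont: "continuous_on (U \<times> UNIV) (Fd r)"
proof (rule continuous_on_blinfun_componentwise)
  fix i :: "'a \<times> 'b"
  have "continuous_on (U \<times> UNIV) (\<lambda>p. Ffun r p i)"
    unfolding Ffun_def by (intro continuous_intros cont_DP_fst cont_Hf cont_Ad_const)
  then show "continuous_on (U \<times> UNIV) (\<lambda>p. Fd r p i)"
    by (rule continuous_on_cong[THEN iffD1, rotated 2]) (auto simp: Fd_apply)
qed

lemma Ad_zero: "Ad x 0 = 0" by (simp add: Ad_def)

lemma Ad_minus: "Ad x (- \<nu>) = - Ad x \<nu>"
  using Ad_scale[of x "-1" \<nu>] by simp

lemma Fd_inj0:
  assumes r: "r > 0" and rC: "r * norm (Blinfun (Hf xb \<mu>)) < 1"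
  shows "inj (blinfun_apply (Fd r (xb, \<mu>)))"
proof -
  have lin: "linear (blinfun_apply (Fd r (xb, \<mu>)))" using blinfun.bounded_linear_right bounded_linear.linear by blast
  have HB: "blinfun_apply (Blinfun (Hf xb \<mu>)) = Hf xb \<mu>" using Hf_linear[OF U(2)] bounded_linear_Blinfun_apply by blast
  let ?C = "norm (Blinfun (Hf xb \<mu>))"
  have "q = 0" if q: "Fd r (xb, \<mu>) q = 0" for q
  proof -
    obtain h \<nu> where hq: "q = (h, \<nu>)" by fastforce
    have e: "h + r *\<^sub>R (Hf xb \<mu> h + Ad xb \<nu>) = 0" "DP xb h = 0"
      using q U(2) by (auto simp: Fd_apply Ffun_def hq zero_prod_def)
    have "h \<bullet> h + r * (Hf xb \<mu> h \<bullet> h) + r * (Ad xb \<nu> \<bullet> h) = 0"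
      using arg_cong[OF e(1), of "\<lambda>w. w \<bullet> h"] by (simp add: inner_add_left algebra_simps)
    moreover have "Ad xb \<nu> \<bullet> h = 0" using Ad_inner e(2) by simp
    ultimately have hh: "h \<bullet> h = - r * (Hf xb \<mu> h \<bullet> h)" by simp
    have "\<bar>Hf xb \<mu> h \<bullet> h\<bar> \<le> norm (Hf xb \<mu> h) * norm h" by (rule Cauchy_Schwarz_ineq2)
    also have "\<dots> \<le> ?C * norm h * norm h"
      using norm_blinfun[of "Blinfun (Hf xb \<mu>)" h] HB by (simp add: mult_right_mono)
    finally have "r * \<bar>Hf xb \<mu> h \<bullet> h\<bar> \<le> r * (?C * (norm h)\<^sup>2)"
      using r by (simp add: power2_eq_square mult.assoc mult_left_mono)
    moreover have "(norm h)\<^sup>2 = h \<bullet> h" by (simp add: power2_norm_eq_inner)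
    moreover have "- r * (Hf xb \<mu> h \<bullet> h) \<le> r * \<bar>Hf xb \<mu> h \<bullet> h\<bar>"
    proof -
      have "r * (- (Hf xb \<mu> h \<bullet> h)) \<le> r * \<bar>Hf xb \<mu> h \<bullet> h\<bar>"
        using r by (intro mult_left_mono) auto
      then show ?thesis by simp
    qed
    ultimately have "(norm h)\<^sup>2 \<le> (r * ?C) * (norm h)\<^sup>2" using hh
      by (simp add: algebra_simps)
    then have "(1 - r * ?C) * (norm h)\<^sup>2 \<le> 0" by (simp add: algebra_simps)
    then have "(norm h)\<^sup>2 \<le> 0" using rC by (simp add: mult_le_0_iff)
    then have h0: "h = 0" by simp
    then have "r *\<^sub>R Ad xb \<nu> = 0" using e(1) by (simp add: Hf_def)
    then have "Ad xb \<nu> = 0" using r by simp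
    then have "\<nu> = 0" using surj_adjoint_inj[OF linDP surj0] by (simp add: Ad_adjoint)
    then show ?thesis using h0 hq by (simp add: zero_prod_def)
  qed
  then show ?thesis using lin by (simp add: linear_injective_0)
qed

end


lemma orth_proj_diff:
  fixes T :: "'a::euclidean_space set"
  assumes T: "subspace T"
  shows "orth_proj T (a - b) = orth_proj T a - orth_proj T b"
proof (rule orth_proj_eq[OF T])
  show "orth_proj T a - orth_proj T b \<in> T" using orth_proj_props(1)[OF T] T subspace_diff by blast
  fix t assume t: "t \<in> T"
  have "(a - b - (orth_proj T a - orth_proj T b)) \<bullet> t = (a - orth_proj T a) \<bullet> t - (b - orth_proj T b) \<bullet> t"
    by (simp add: inner_diff_left algebra_simps)
  then show "(a - b - (orth_proj T a - orth_proj T b)) \<bullet> t = 0" using orth_proj_props(2)[OF T t] by simp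
qed

context Setting
begin

lemma Ad_diff: "Ad x (a - b) = Ad x a - Ad x b"
  by (simp add: Ad_def inner_diff_left scaleR_diff_left sum_subtractf)

lemma Hf_diff: "x \<in> U \<Longrightarrow> Hf x \<mu> (a - b) = Hf x \<mu> a - Hf x \<mu> b"
  using Hf_linear linear_diff bounded_linear.linear by metis

lemma Hf_scale0: "Hf x \<mu> 0 = 0" by (simp add: Hf_def)

lemma T_subspace: "subspace {h. DP x h = 0}"
  using linear_subspace_kernel[OF linDP] .

lemma formula_at:
  assumes r: "r > 0" and xU: "x \<in> U" and injB: "inj (blinfun_apply (Fd r (x, \<mu>z)))"
    and Gv: "G x \<mu>z = (1 / r) *\<^sub>R (z - x)"
    and px: "p z = x"
    and pd: "frechet_derivative p (at z) = (\<lambda>w. fst (binv (Fd r (x, \<mu>z)) (w, 0)))"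
  shows "let x = p z; T = tangent_sp \<Phi> x in
          (\<exists>!\<mu>. grad (\<lambda>u. lagr fhat \<Phi> u \<mu>) x = (1 / r) *\<^sub>R (z - x)) \<and>
          (let \<mu> = (THE \<mu>. grad (\<lambda>u. lagr fhat \<Phi> u \<mu>) x = (1 / r) *\<^sub>R (z - x));
               A = (\<lambda>h. orth_proj T (h + r *\<^sub>R hess (\<lambda>u. lagr fhat \<Phi> u \<mu>) x h))
           in inj_on A T \<and> A ` T = T \<and>
              (\<forall>w. frechet_derivative p (at z) w = the_inv_into T A (orth_proj T w)))"
proof -
  define T where "T = {h. DP x h = 0}"
  have TT: "tangent_sp \<Phi> x = T" unfolding T_def using tangent_eq[OF xU] .
  have sT: "subspace T" unfolding T_def by (rule T_subspace)
  let ?B = "Fd r (x, \<mu>z)"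
  have Bapp: "\<And>q. ?B q = Ffun r (x, \<mu>z) q" using Fd_apply[of "(x, \<mu>z)" r] xU by simp
  have Bbinv: "\<And>y. ?B (binv ?B y) = y" using binv_props(2)[OF injB] .
  have surjDP: "\<exists>h. DP x h = \<eta>" for \<eta>
  proof -
    have "?B (binv ?B (0, \<eta>)) = (0, \<eta>)" by (rule Bbinv)
    then show ?thesis by (auto simp: Bapp Ffun_def)
  qed
  have grad_eq: "\<And>\<mu>. grad (\<lambda>u. lagr fhat \<Phi> u \<mu>) x = G x \<mu>" using grad_lagr[OF xU] .
  have uniq: "\<mu>1 = \<mu>2" if "G x \<mu>1 = G x \<mu>2" for \<mu>1 \<mu>2
  proof -
    have "Ad x (\<mu>1 - \<mu>2) = 0" using that by (simp add: G_def Ad_diff)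
    then have "\<mu>1 - \<mu>2 = 0"
      using surj_adjoint_inj[OF linDP, of x "\<mu>1 - \<mu>2"] surjDP by (auto simp: Ad_adjoint surj_def) (metis)
    then show ?thesis by simp
  qed
  have ex1: "\<exists>!\<mu>. grad (\<lambda>u. lagr fhat \<Phi> u \<mu>) x = (1 / r) *\<^sub>R (z - x)"
    using Gv uniq unfolding grad_eq by metis
  have the: "(THE \<mu>. grad (\<lambda>u. lagr fhat \<Phi> u \<mu>) x = (1 / r) *\<^sub>R (z - x)) = \<mu>z"
  proof (rule the_equality)
    show "grad (\<lambda>u. lagr fhat \<Phi> u \<mu>z) x = (1 / r) *\<^sub>R (z - x)" using Gv grad_eq by simp
    fix \<mu> assume "grad (\<lambda>u. lagr fhat \<Phi> u \<mu>) x = (1 / r) *\<^sub>R (z - x)"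
    then have "G x \<mu> = G x \<mu>z" using Gv grad_eq by simp
    then show "\<mu> = \<mu>z" by (rule uniq)
  qed
  have hs: "hess (\<lambda>u. lagr fhat \<Phi> u \<mu>z) x = Hf x \<mu>z" using hess_lagr[OF xU] .
  define A where "A = (\<lambda>h. orth_proj T (h + r *\<^sub>R Hf x \<mu>z h))"
  have Aperp: "A h = orth_proj T (h + r *\<^sub>R (Hf x \<mu>z h + Ad x \<nu>))" for h \<nu>
  proof -
    have "h + r *\<^sub>R (Hf x \<mu>z h + Ad x \<nu>) = (h + r *\<^sub>R Hf x \<mu>z h) + r *\<^sub>R Ad x \<nu>"
      by (simp add: scaleR_add_right)
    moreover have "(r *\<^sub>R Ad x \<nu>) \<bullet> t = 0" if "t \<in> T" for t
      using that Ad_inner[of x \<nu> t] by (simp add: T_def)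
    ultimately show ?thesis unfolding A_def using orth_proj_add_perp[OF sT] by metis
  qed
  have injA: "inj_on A T"
  proof (rule inj_onI)
    fix h1 h2 assume h1: "h1 \<in> T" and h2: "h2 \<in> T" and eq: "A h1 = A h2"
    define h where "h = h1 - h2"
    have hT: "h \<in> T" using h1 h2 sT subspace_diff unfolding h_def by blast
    define w where "w = h + r *\<^sub>R Hf x \<mu>z h"
    have "w = (h1 + r *\<^sub>R Hf x \<mu>z h1) - (h2 + r *\<^sub>R Hf x \<mu>z h2)"
      unfolding w_def h_def Hf_diff[OF xU] by (simp add: scaleR_diff_right algebra_simps)
    then have "orth_proj T w = 0" using eq unfolding A_def by (simp add: orth_proj_diff[OF sT])
    then have "w \<bullet> t = 0" if "t \<in> T" for t using orth_proj_props(2)[OF sT that, of w] by simp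
    then have "w \<in> range (Ad x)" unfolding Ad_adjoint
      by (intro ker_perp_range_adjoint[OF linDP]) (auto simp: T_def)
    then obtain \<nu> where \<nu>: "w = Ad x \<nu>" by blast
    have s1: "h + r *\<^sub>R (Hf x \<mu>z h + Ad x (- ((1 / r) *\<^sub>R \<nu>))) = (h + r *\<^sub>R Hf x \<mu>z h) - Ad x \<nu>"
      using r by (simp add: Ad_minus Ad_scale scaleR_add_right scaleR_diff_right)
    have "?B (h, - ((1 / r) *\<^sub>R \<nu>)) = 0"
      using hT \<nu> unfolding Bapp Ffun_def T_def
      by (simp add: s1 zero_prod_def w_def[symmetric])
    then have "(h, - ((1 / r) *\<^sub>R \<nu>)) = 0"
      using injB by (metis blinfun.zero_right injD)
    then have "h = 0" by (simp add: zero_prod_def)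
    then show "h1 = h2" by (simp add: h_def)
  qed
  have AT: "A ` T = T"
  proof
    show "A ` T \<subseteq> T" unfolding A_def using orth_proj_props(1)[OF sT] by blast
    show "T \<subseteq> A ` T"
    proof
      fix t assume t: "t \<in> T"
      define q where "q = binv ?B (t, 0)"
      have "Ffun r (x, \<mu>z) q = (t, 0)" using Bbinv[of "(t,0)"] by (simp add: q_def Bapp)
      then have e: "fst q + r *\<^sub>R (Hf x \<mu>z (fst q) + Ad x (snd q)) = t" "DP x (fst q) = 0"
        by (auto simp: Ffun_def)
      have "A (fst q) = t" using Aperp[of "fst q" "snd q"] e(1) orth_proj_self[OF sT t] by simp
      moreover have "fst q \<in> T" using e(2) by (simp add: T_def)
      ultimately show "t \<in> A ` T" by blast
    qed
  qed
  have dform: "frechet_derivative p (at z) w = the_inv_into T A (orth_proj T w)" for w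
  proof -
    define q where "q = binv ?B (w, 0)"
    have "Ffun r (x, \<mu>z) q = (w, 0)" using Bbinv[of "(w,0)"] by (simp add: q_def Bapp)
    then have e: "fst q + r *\<^sub>R (Hf x \<mu>z (fst q) + Ad x (snd q)) = w" "DP x (fst q) = 0"
      by (auto simp: Ffun_def)
    have qT: "fst q \<in> T" using e(2) by (simp add: T_def)
    have "A (fst q) = orth_proj T w" using Aperp[of "fst q" "snd q"] e(1) by simp
    then have "the_inv_into T A (orth_proj T w) = fst q" using the_inv_into_f_f[OF injA qT] by simp
    then show ?thesis using pd by (simp add: q_def)
  qed
  show ?thesis
    unfolding Let_def px TT the hs
    using ex1[unfolded px] injA AT dform unfolding A_def px by auto
qed

end


lemma solve_eq:
  fixes w :: "'c::real_vector"
  assumes "x + r *\<^sub>R w = z" "r \<noteq> 0"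
  shows "(1 / r) *\<^sub>R (z - x) = w"
proof -
  have "z - x = r *\<^sub>R w" using assms(1) by (metis add_diff_cancel_left')
  then show ?thesis using assms(2) by simp
qed

context Setting
begin

lemma main_fixed_r:
  assumes \<delta>: "\<delta> > 0"
    and uQ: "\<And>x v. x \<in> M \<inter> U \<Longrightarrow> dist x xb < \<delta> \<Longrightarrow> dist v vb < \<delta> \<Longrightarrow> v - gradf x \<in> range (Ad x) \<Longrightarrow> Q x v"
    and \<mu>b: "G xb \<mu>b = vb"
    and lbf: "\<And>u. f u \<ge> ereal (c - A * (norm u)\<^sup>2)" and A0: "A \<ge> 0"
    and r: "r > 0" "r \<le> 1" "r * \<rho> < 1" "r * norm (Blinfun (Hf xb \<mu>b)) < 1" "r * (32 * A + 1) \<le> 1"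
      "r * (norm vb + 1) \<le> \<epsilon> / 4"
      "r * 16 * (\<bar>(fhat xb + 1 + (norm vb + 1)\<^sup>2 / 2) - c + 2 * A * (norm xb)\<^sup>2\<bar> + 1) < \<epsilon>\<^sup>2"
  shows "\<exists>W p. open W \<and> xb + r *\<^sub>R vb \<in> W \<and>
       (\<forall>z\<in>W. prox r f z = {p z} \<and> p z \<in> M \<inter> U) \<and>
       C1_on W p \<and>
       (\<forall>z\<in>W. let x = p z; T = tangent_sp \<Phi> x in
          (\<exists>!\<mu>. grad (\<lambda>u. lagr fhat \<Phi> u \<mu>) x = (1 / r) *\<^sub>R (z - x)) \<and>
          (let \<mu> = (THE \<mu>. grad (\<lambda>u. lagr fhat \<Phi> u \<mu>) x = (1 / r) *\<^sub>R (z - x));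
               A = (\<lambda>h. orth_proj T (h + r *\<^sub>R hess (\<lambda>u. lagr fhat \<Phi> u \<mu>) x h))
           in inj_on A T \<and> A ` T = T \<and>
              (\<forall>w. frechet_derivative p (at z) w = the_inv_into T A (orth_proj T w))))"
proof -
  let ?K0 = "fhat xb + 1 + (norm vb + 1)\<^sup>2 / 2"
  have S: "open (U \<times> (UNIV::'b set))" using U(1) by (simp add: open_Times)
  have der: "\<And>p. p \<in> U \<times> UNIV \<Longrightarrow> (Fmap r has_derivative blinfun_apply (Fd r p)) (at p)"
  proof -
    fix p :: "'a \<times> 'b" assume "p \<in> U \<times> UNIV"
    then have "fst p \<in> U" by (auto simp: mem_Times_iff)
    then show "(Fmap r has_derivative blinfun_apply (Fd r p)) (at p)" using Fmap_deriv[of p r] Fd_apply[of p r] by simp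
  qed
  have c0: "(xb, \<mu>b) \<in> U \<times> UNIV" using U(2) by simp
  obtain UF VF g where UF: "open UF" "UF \<subseteq> U \<times> UNIV" "(xb, \<mu>b) \<in> UF" and VF: "open VF" "Fmap r (xb, \<mu>b) \<in> VF"
    and hom: "homeomorphism UF VF (Fmap r) g"
    and dg: "\<And>y. y \<in> VF \<Longrightarrow> (g has_derivative blinfun_apply (binv (Fd r (g y)))) (at y)"
    and ij: "\<And>y. y \<in> VF \<Longrightarrow> inj (blinfun_apply (Fd r (g y)))"
    using ift_wrap[OF S der Fd_cont c0 Fd_inj0[OF r(1) r(4)]] by blast
  have gF: "\<And>y. y \<in> VF \<Longrightarrow> Fmap r (g y) = y" and gU: "\<And>y. y \<in> VF \<Longrightarrow> g y \<in> UF"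
    and Fg: "\<And>p. p \<in> UF \<Longrightarrow> g (Fmap r p) = p" and cg: "continuous_on VF g"
    using hom unfolding homeomorphism_def by auto
  have Pxb: "\<Phi> xb = 0" using U MU by auto
  define zb where "zb = xb + r *\<^sub>R vb"
  have Fb: "Fmap r (xb, \<mu>b) = (zb, 0)" by (simp add: Fmap_def \<mu>b Pxb zb_def)
  have gb: "g (zb, 0) = (xb, \<mu>b)" using Fg[OF UF(3)] Fb by simp
  define \<delta>x where "\<delta>x = min \<delta> (\<epsilon> / 4)"
  define \<delta>v where "\<delta>v = min \<delta> 1"
  define W0 where "W0 = (\<lambda>z. (z, 0::'b)) -` VF"
  have oW0: "open W0" unfolding W0_def by (rule continuous_open_vimage[OF VF(1)]) (intro continuous_intros)
  define \<Psi> where "\<Psi> z = g (z, 0::'b)" for z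
  have \<Psi>U: "z \<in> W0 \<Longrightarrow> fst (\<Psi> z) \<in> U" for z
  proof -
    assume "z \<in> W0"
    then have "g (z, 0) \<in> UF" using gU by (simp add: W0_def)
    then have "g (z, 0) \<in> U \<times> UNIV" using UF(2) by blast
    then show ?thesis by (simp add: \<Psi>_def mem_Times_iff)
  qed
  have \<Psi>UU: "z \<in> W0 \<Longrightarrow> \<Psi> z \<in> U \<times> UNIV" for z
  proof -
    assume "z \<in> W0"
    then have "g (z, 0) \<in> UF" using gU by (simp add: W0_def)
    then show ?thesis using UF(2) by (auto simp: \<Psi>_def)
  qed
  have c\<Psi>: "continuous_on W0 \<Psi>"
    unfolding \<Psi>_def W0_def by (rule continuous_on_compose2[OF cg]) (auto intro!: continuous_intros)
  have cx: "continuous_on W0 (\<lambda>z. fst (\<Psi> z))" by (intro continuous_intros c\<Psi>)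
  have cfx: "continuous_on W0 (\<lambda>z. fhat (fst (\<Psi> z)))"
    by (rule continuous_on_compose2[OF cont_fhat cx]) (use \<Psi>U in auto)
  define \<Theta> where "\<Theta> z = (fst (\<Psi> z), fhat (fst (\<Psi> z)), (1 / r) *\<^sub>R (z - fst (\<Psi> z)))" for z
  have c\<Theta>: "continuous_on W0 \<Theta>" unfolding \<Theta>_def by (intro continuous_intros cx cfx)
  define W where "W = W0 \<inter> \<Theta> -` (ball xb \<delta>x \<times> ({..< fhat xb + 1} \<times> ball vb \<delta>v))"
  have oW: "open W" unfolding W_def
    by (rule continuous_open_preimage[OF c\<Theta> oW0]) (auto intro!: open_Times)
  have \<delta>x0: "\<delta>x > 0" using \<delta> eps by (simp add: \<delta>x_def)
  have \<delta>v0: "\<delta>v > 0" using \<delta> by (simp add: \<delta>v_def)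
  have zbW: "zb \<in> W"
  proof -
    have "zb \<in> W0" using VF(2) Fb by (simp add: W0_def)
    moreover have "(1 / r) *\<^sub>R (zb - xb) = vb" using r(1) by (simp add: zb_def)
    ultimately show ?thesis using \<delta>x0 \<delta>v0 by (simp add: W_def \<Theta>_def \<Psi>_def gb)
  qed
  define p where "p z = fst (g (z, 0::'b))" for z
  have pt: "p z \<in> M \<inter> U \<and> p z + r *\<^sub>R G (p z) (snd (g (z, 0))) = z \<and> dist (p z) xb < \<delta>x
      \<and> fhat (p z) < fhat xb + 1 \<and> dist ((1 / r) *\<^sub>R (z - p z)) vb < \<delta>v \<and> (z, 0) \<in> VF" if z: "z \<in> W" for z
  proof -
    have zW0: "z \<in> W0" and th: "\<Theta> z \<in> ball xb \<delta>x \<times> ({..< fhat xb + 1} \<times> ball vb \<delta>v)" using z by (auto simp: W_def)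
    have V: "(z, 0) \<in> VF" using zW0 by (simp add: W0_def)
    have F: "Fmap r (g (z, 0)) = (z, 0)" using gF[OF V] .
    have xU: "p z \<in> U" using \<Psi>U[OF zW0] by (simp add: p_def \<Psi>_def)
    have e: "p z + r *\<^sub>R G (p z) (snd (g (z, 0))) = z" "\<Phi> (p z) = 0"
      using F by (auto simp: Fmap_def p_def prod_eq_iff)
    have "p z \<in> M \<inter> U" using xU e(2) MU by auto
    moreover have "dist (p z) xb < \<delta>x" "fhat (p z) < fhat xb + 1" "dist ((1 / r) *\<^sub>R (z - p z)) vb < \<delta>v"
      using th by (auto simp: \<Theta>_def \<Psi>_def p_def dist_commute)
    ultimately show ?thesis using e V by blast
  qed
  have proxz: "prox r f z = {p z}" if z: "z \<in> W" for z
  proof -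
    define x where "x = p z"
    define v where "v = (1 / r) *\<^sub>R (z - x)"
    have xM: "x \<in> M \<inter> U" and eqz: "x + r *\<^sub>R G x (snd (g (z, 0))) = z" and dx: "dist x xb < \<delta>x"
      and fx1: "fhat x < fhat xb + 1" and dv: "dist v vb < \<delta>v"
      using pt[OF z] by (auto simp: x_def v_def)
    have vG: "v = G x (snd (g (z, 0)))" using solve_eq[OF eqz] r(1) by (simp add: v_def)
    have zxv: "z = x + r *\<^sub>R v" using r(1) by (simp add: v_def)
    have Qxv: "Q x v"
    proof (rule uQ[OF xM])
      show "dist x xb < \<delta>" using dx by (simp add: \<delta>x_def)
      show "dist v vb < \<delta>" using dv by (simp add: \<delta>v_def)
      show "v - gradf x \<in> range (Ad x)" by (simp add: vG G_def)
    qed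
    have nv: "norm v \<le> norm vb + 1"
    proof -
      have "norm v \<le> norm vb + dist v vb" by (metis dist_norm norm_triangle_sub add.commute)
      then show ?thesis using dv by (simp add: \<delta>v_def)
    qed
    have fxK: "f x + ereal ((norm (x - z))\<^sup>2 / (2 * r)) \<le> ereal ?K0"
    proof -
      have "(norm (x - z))\<^sup>2 / (2 * r) = r * (norm v)\<^sup>2 / 2"
        using r(1) by (simp add: zxv power_mult_distrib power2_eq_square)
      also have "\<dots> \<le> 1 * (norm vb + 1)\<^sup>2 / 2"
        using r nv by (intro divide_right_mono mult_mono power_mono) auto
      finally have "(norm (x - z))\<^sup>2 / (2 * r) \<le> (norm vb + 1)\<^sup>2 / 2" by simp
      then show ?thesis using fM[OF xM] fx1 by simp
    qed
    have far: "f x + ereal ((norm (x - z))\<^sup>2 / (2 * r)) < f u + ereal ((norm (u - z))\<^sup>2 / (2 * r))"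
      if u: "dist u xb > \<epsilon>" for u
    proof -
      define d where "d = norm (u - xb)"
      have dd: "d > \<epsilon>" using u by (simp add: d_def dist_norm)
      have zx: "norm (z - xb) \<le> \<epsilon> / 2"
      proof -
        have "norm (z - xb) \<le> norm (x - xb) + norm (r *\<^sub>R v)"
          using norm_triangle_ineq[of "x - xb" "r *\<^sub>R v"] by (simp add: zxv algebra_simps)
        also have "norm (r *\<^sub>R v) \<le> r * (norm vb + 1)" using r(1) nv by (simp add: mult_left_mono)
        also have "norm (x - xb) \<le> \<epsilon> / 4" using dx by (simp add: \<delta>x_def dist_norm)
        finally show ?thesis using r(6) by simp
      qed
      have duz: "norm (u - z) \<ge> d / 2"
      proof -
        have "d \<le> norm (u - z) + norm (z - xb)" unfolding d_def using norm_triangle_ineq[of "u - z" "z - xb"] by simp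
        then show ?thesis using zx dd by simp
      qed
      have nu: "norm u \<le> norm xb + d" unfolding d_def using norm_triangle_ineq[of xb "u - xb"] by simp
      have "?K0 < c - A * (norm u)\<^sup>2 + (norm (u - z))\<^sup>2 / (2 * r)"
        by (rule far_real[OF A0 eps(1) dd duz nu norm_ge_zero norm_ge_zero r(1) r(5) r(7)])
      then have "ereal ?K0 < f u + ereal ((norm (u - z))\<^sup>2 / (2 * r))"
      proof (cases "f u")
        case (real y)
        then show ?thesis using lbf[of u] \<open>?K0 < _\<close> by simp
      next
        case PInf then show ?thesis by simp
      next
        case MInf then show ?thesis using lbf[of u] by simp
      qed
      then show ?thesis by (rule le_less_trans[OF fxK])
    qed
    have "r * \<rho> < 1" using r(3) .
    show ?thesis unfolding x_def[symmetric] by (rule prox_unique[OF xM Qxv r(1) r(3) zxv far])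
  qed
  define Dp where "Dp z = Blinfun (\<lambda>w. fst (binv (Fd r (g (z, 0))) (w, 0)))" for z
  have dp: "(p has_derivative (\<lambda>w. fst (binv (Fd r (g (z, 0))) (w, 0)))) (at z)" if z: "z \<in> W0" for z
  proof -
    have V: "(z, 0) \<in> VF" using z by (simp add: W0_def)
    have "((\<lambda>z. g (z, 0::'b)) has_derivative (\<lambda>w. binv (Fd r (g (z, 0))) (w, 0))) (at z)"
      using has_derivative_compose[OF has_derivative_Pair[OF has_derivative_ident has_derivative_const[of 0]] dg[OF V]]
      by blast
    from has_derivative_fst[OF this] show ?thesis unfolding p_def .
  qed
  have Dp_apply: "blinfun_apply (Dp z) = (\<lambda>w. fst (binv (Fd r (g (z, 0))) (w, 0)))" if "z \<in> W0" for z
    unfolding Dp_def using dp[OF that] has_derivative_bounded_linear bounded_linear_Blinfun_apply by blast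
  have W0W: "W \<subseteq> W0" by (auto simp: W_def)
  have C1: "C1_on W p"
    unfolding C1_on_def
  proof (intro conjI oW exI[of _ Dp] ballI)
    fix z assume "z \<in> W"
    then show "(p has_derivative blinfun_apply (Dp z)) (at z)" using dp Dp_apply W0W by auto
  next
    have cFd: "continuous_on W0 (\<lambda>z. Fd r (\<Psi> z))"
      by (rule continuous_on_compose2[OF Fd_cont c\<Psi>]) (use \<Psi>UU in blast)
    have cB: "continuous_on W0 (\<lambda>z. binv (Fd r (\<Psi> z)))"
      by (rule binv_continuous_on[OF cFd]) (simp add: ij W0_def \<Psi>_def)
    show "continuous_on W Dp"
    proof (rule continuous_on_blinfun_componentwise)
      fix i :: 'a
      have "continuous_on W0 (\<lambda>z. fst (binv (Fd r (\<Psi> z)) (i, 0)))"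
        by (intro continuous_intros cB)
      then have "continuous_on W (\<lambda>z. fst (binv (Fd r (\<Psi> z)) (i, 0)))"
        using continuous_on_subset W0W by blast
      then show "continuous_on W (\<lambda>z. Dp z i)"
        by (rule continuous_on_cong[THEN iffD1, rotated 2]) (use W0W Dp_apply in \<open>auto simp: \<Psi>_def\<close>)
    qed
  qed
  have form: "let x = p z; T = tangent_sp \<Phi> x in
          (\<exists>!\<mu>. grad (\<lambda>u. lagr fhat \<Phi> u \<mu>) x = (1 / r) *\<^sub>R (z - x)) \<and>
          (let \<mu> = (THE \<mu>. grad (\<lambda>u. lagr fhat \<Phi> u \<mu>) x = (1 / r) *\<^sub>R (z - x));
               A = (\<lambda>h. orth_proj T (h + r *\<^sub>R hess (\<lambda>u. lagr fhat \<Phi> u \<mu>) x h))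
           in inj_on A T \<and> A ` T = T \<and>
              (\<forall>w. frechet_derivative p (at z) w = the_inv_into T A (orth_proj T w)))" if z: "z \<in> W" for z
  proof -
    have ptz: "p z \<in> M \<inter> U" "p z + r *\<^sub>R G (p z) (snd (g (z, 0))) = z" "(z, 0) \<in> VF" using pt[OF z] by auto
    have gz: "g (z, 0) = (p z, snd (g (z, 0)))" by (simp add: p_def)
    have injB: "inj (blinfun_apply (Fd r (p z, snd (g (z, 0)))))" using ij[OF ptz(3)] gz by simp
    have Gv: "G (p z) (snd (g (z, 0))) = (1 / r) *\<^sub>R (z - p z)"
      using solve_eq[OF ptz(2)] r(1) by simp
    have pd: "frechet_derivative p (at z) = (\<lambda>w. fst (binv (Fd r (p z, snd (g (z, 0)))) (w, 0)))"
      using dp[of z] W0W z frechet_derivative_at gz by (metis subsetD)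
    show ?thesis by (rule formula_at[OF r(1) _ injB Gv refl pd]) (use ptz in auto)
  qed
  show ?thesis
    apply (rule exI[of _ W], rule exI[of _ p])
    using oW zbW proxz pt C1 form by (auto simp: zb_def)
qed

lemma main:
  "\<exists>r0>0. \<forall>r. 0 < r \<and> r < r0 \<longrightarrow>
    (\<exists>W p. open W \<and> xb + r *\<^sub>R vb \<in> W \<and>
       (\<forall>z\<in>W. prox r f z = {p z} \<and> p z \<in> M \<inter> U) \<and>
       C1_on W p \<and>
       (\<forall>z\<in>W. let x = p z; T = tangent_sp \<Phi> x in
          (\<exists>!\<mu>. grad (\<lambda>u. lagr fhat \<Phi> u \<mu>) x = (1 / r) *\<^sub>R (z - x)) \<and>
          (let \<mu> = (THE \<mu>. grad (\<lambda>u. lagr fhat \<Phi> u \<mu>) x = (1 / r) *\<^sub>R (z - x));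
               A = (\<lambda>h. orth_proj T (h + r *\<^sub>R hess (\<lambda>u. lagr fhat \<Phi> u \<mu>) x h))
           in inj_on A T \<and> A ` T = T \<and>
              (\<forall>w. frechet_derivative p (at z) w = the_inv_into T A (orth_proj T w)))))"
proof -
  obtain \<delta> where \<delta>: "\<delta> > 0" and uQ: "\<And>x v. x \<in> M \<inter> U \<Longrightarrow> dist x xb < \<delta> \<Longrightarrow> dist v vb < \<delta> \<Longrightarrow> v - gradf x \<in> range (Ad x) \<Longrightarrow> Q x v"
    using uniform_Q by blast
  have xbM: "xb \<in> M \<inter> U" using U by simp
  have fxb: "f xb = ereal (fhat xb)" using fM[OF xbM] .
  have Qb: "Q xb vb" unfolding Q_def
    using preg[of xb vb] vb0 eps fxb by simp
  obtain \<delta>1 where \<delta>1: "\<delta>1 > 0" and fo: "\<And>x v. x \<in> M \<inter> U \<Longrightarrow> dist x xb < \<delta>1 \<Longrightarrow> Q x v \<Longrightarrow> v - gradf x \<in> range (Ad x)"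
    using first_order_range by blast
  have "vb - gradf xb \<in> range (Ad xb)" using fo[OF xbM _ Qb] \<delta>1 by simp
  then obtain \<mu>b where "Ad xb \<mu>b = vb - gradf xb" by (metis rangeE)
  then have \<mu>b: "G xb \<mu>b = vb" by (simp add: G_def)
  obtain \<alpha> c where pbc: "\<And>x. f x + ereal (\<alpha> * (norm x)\<^sup>2) \<ge> ereal c" using pb by blast
  define A where "A = \<bar>\<alpha>\<bar>"
  have A0: "A \<ge> 0" by (simp add: A_def)
  have lbf: "f u \<ge> ereal (c - A * (norm u)\<^sup>2)" for u
  proof (cases "f u")
    case (real y)
    then have "y + \<alpha> * (norm u)\<^sup>2 \<ge> c" using pbc[of u] by simp
    moreover have "\<alpha> * (norm u)\<^sup>2 \<le> A * (norm u)\<^sup>2" unfolding A_def by (intro mult_right_mono) auto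
    ultimately show ?thesis using real by simp
  next
    case PInf then show ?thesis by simp
  next
    case MInf then show ?thesis using pbc[of u] by simp
  qed
  define Cn where "Cn = norm (Blinfun (Hf xb \<mu>b))"
  define K0 where "K0 = fhat xb + 1 + (norm vb + 1)\<^sup>2 / 2"
  define L where "L = \<bar>K0 - c + 2 * A * (norm xb)\<^sup>2\<bar> + 1"
  define r0 where "r0 = min (min 1 (1 / (\<rho> + 1))) (min (1 / (Cn + 1)) (min (1 / (32 * A + 1))
      (min (\<epsilon> / (4 * (norm vb + 1))) (\<epsilon>\<^sup>2 / (16 * L)))))"
  have Cn0: "Cn \<ge> 0" by (simp add: Cn_def)
  have L0: "L > 0" unfolding L_def using abs_ge_zero[of "K0 - c + 2 * A * (norm xb)\<^sup>2"] by linarith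
  have nv0: "norm vb + 1 > 0" using norm_ge_zero[of vb] by linarith
  have r00: "r0 > 0" unfolding r0_def using eps Cn0 A0 L0 nv0
    by (simp add: add_pos_nonneg)
  show ?thesis
  proof (intro exI[of _ r0] conjI r00 allI impI)
    fix r assume r: "0 < r \<and> r < r0"
    have rr: "r > 0" using r by simp
    have "r < 1 / (\<rho> + 1)" using r by (simp add: r0_def)
    then have "r * (\<rho> + 1) < 1" using eps by (simp add: less_divide_eq add_pos_nonneg)
    then have c3: "r * \<rho> < 1" using rr by (simp add: algebra_simps)
    have "r < 1 / (Cn + 1)" using r by (simp add: r0_def)
    then have "r * (Cn + 1) < 1" using Cn0 by (simp add: less_divide_eq add_pos_nonneg)
    then have c4: "r * Cn < 1" using rr by (simp add: algebra_simps)
    have "r < 1 / (32 * A + 1)" using r by (simp add: r0_def)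
    then have c5: "r * (32 * A + 1) \<le> 1" using A0 by (simp add: less_divide_eq add_pos_nonneg)
    have "r < \<epsilon> / (4 * (norm vb + 1))" using r by (simp add: r0_def)
    then have "r * (4 * (norm vb + 1)) < \<epsilon>" using nv0 by (simp add: less_divide_eq)
    then have c6: "r * (norm vb + 1) \<le> \<epsilon> / 4" by (simp add: algebra_simps)
    have "r < \<epsilon>\<^sup>2 / (16 * L)" using r by (simp add: r0_def)
    then have "r * (16 * L) < \<epsilon>\<^sup>2" using L0 by (simp add: less_divide_eq)
    then have c7: "r * 16 * (\<bar>(fhat xb + 1 + (norm vb + 1)\<^sup>2 / 2) - c + 2 * A * (norm xb)\<^sup>2\<bar> + 1) < \<epsilon>\<^sup>2"
      by (simp add: L_def K0_def mult.assoc)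
    have c2: "r \<le> 1" using r by (simp add: r0_def)
    show "\<exists>W p. open W \<and> xb + r *\<^sub>R vb \<in> W \<and>
       (\<forall>z\<in>W. prox r f z = {p z} \<and> p z \<in> M \<inter> U) \<and>
       C1_on W p \<and>
       (\<forall>z\<in>W. let x = p z; T = tangent_sp \<Phi> x in
          (\<exists>!\<mu>. grad (\<lambda>u. lagr fhat \<Phi> u \<mu>) x = (1 / r) *\<^sub>R (z - x)) \<and>
          (let \<mu> = (THE \<mu>. grad (\<lambda>u. lagr fhat \<Phi> u \<mu>) x = (1 / r) *\<^sub>R (z - x));
               A = (\<lambda>h. orth_proj T (h + r *\<^sub>R hess (\<lambda>u. lagr fhat \<Phi> u \<mu>) x h))
           in inj_on A T \<and> A ` T = T \<and>
              (\<forall>w. frechet_derivative p (at z) w = the_inv_into T A (orth_proj T w))))"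
      by (rule main_fixed_r[OF \<delta> uQ \<mu>b lbf A0 rr c2 c3 c4[unfolded Cn_def] c5 c6 c7])
  qed
qed

end


theorem corollary3p19:
  fixes f :: "'a::euclidean_space \<Rightarrow> ereal"
    and fhat :: "'a \<Rightarrow> real"
    and \<Phi> :: "'a \<Rightarrow> 'b::euclidean_space"
    and M Ou :: "'a set"
    and xb vb :: 'a
  assumes O: "open Ou" "xb \<in> Ou" "xb \<in> M"
    and Phi_C2: "C2_on Ou \<Phi>"
    and M_loc: "M \<inter> Ou = {x \<in> Ou. \<Phi> x = 0}"
    and Phi_surj: "surj (frechet_derivative \<Phi> (at xb))"
    and ps: "partly_smooth f fhat \<Phi> M xb"
    and vb_ri: "vb \<in> rel_interior (lim_subdiff f xb)"
    and preg: "prox_regular f xb vb"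
    and scont: "subdiff_continuous f xb vb"
    and pbdd: "prox_bounded f"
  shows "\<exists>r0>0. \<forall>r. 0 < r \<and> r < r0 \<longrightarrow>
    (\<exists>W p. open W \<and> xb + r *\<^sub>R vb \<in> W \<and>
       (\<forall>z\<in>W. prox r f z = {p z} \<and> p z \<in> M \<inter> Ou) \<and>
       C1_on W p \<and>
       (\<forall>z\<in>W. let x = p z; T = tangent_sp \<Phi> x in
          (\<exists>!\<mu>. grad (\<lambda>u. lagr fhat \<Phi> u \<mu>) x = (1 / r) *\<^sub>R (z - x)) \<and>
          (let \<mu> = (THE \<mu>. grad (\<lambda>u. lagr fhat \<Phi> u \<mu>) x = (1 / r) *\<^sub>R (z - x));
               A = (\<lambda>h. orth_proj T (h + r *\<^sub>R hess (\<lambda>u. lagr fhat \<Phi> u \<mu>) x h))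
           in inj_on A T \<and> A ` T = T \<and>
              (\<forall>w. frechet_derivative p (at z) w = the_inv_into T A (orth_proj T w)))))"
proof -
  obtain U0 where U0: "xb \<in> U0" "C2_on U0 fhat" "\<And>x. x \<in> M \<inter> U0 \<Longrightarrow> f x = ereal (fhat x)"
    using ps unfolding partly_smooth_def by blast
  have normals0: "normal_sp \<Phi> xb = par (lim_subdiff f xb)"
    and innerlim: "inner_lim_within M (lim_subdiff f) xb = lim_subdiff f xb"
    using ps unfolding partly_smooth_def by blast+
  obtain Df D2f where oU0: "open U0" and dfh: "\<And>x. x \<in> U0 \<Longrightarrow> (fhat has_derivative blinfun_apply (Df x)) (at x)"
    and d2fh: "\<And>x. x \<in> U0 \<Longrightarrow> (Df has_derivative blinfun_apply (D2f x)) (at x)"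
    and cD2f: "continuous_on U0 D2f"
    using U0(2) unfolding C2_on_def by blast
  obtain DP D2P where dP: "\<And>x. x \<in> Ou \<Longrightarrow> (\<Phi> has_derivative blinfun_apply (DP x)) (at x)"
    and d2P: "\<And>x. x \<in> Ou \<Longrightarrow> (DP has_derivative blinfun_apply (D2P x)) (at x)"
    and cD2P: "continuous_on Ou D2P"
    using Phi_C2 unfolding C2_on_def by blast
  obtain \<epsilon> \<rho> where eps: "\<epsilon> > 0" "\<rho> \<ge> 0"
    and pr: "\<And>x' v'. dist (x', v') (xb, vb) \<le> \<epsilon> \<and> v' \<in> lim_subdiff f x' \<and> f x' \<le> f xb + ereal \<epsilon> \<Longrightarrow>
        (\<forall>u. dist u xb \<le> \<epsilon> \<longrightarrow> f u \<ge> f x' + ereal (v' \<bullet> (u - x') - \<rho> / 2 * (norm (u - x'))\<^sup>2))"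
    using preg unfolding prox_regular_def by blast
  have vb0: "vb \<in> lim_subdiff f xb" using preg unfolding prox_regular_def by blast
  define U where "U = U0 \<inter> Ou"
  have UOu: "U \<subseteq> Ou" and UU0: "U \<subseteq> U0" by (auto simp: U_def)
  have fdxb: "frechet_derivative \<Phi> (at xb) = blinfun_apply (DP xb)"
    using dP[OF O(2)] frechet_derivative_at by metis
  interpret S: Setting f fhat \<Phi> M U xb vb Df D2f DP D2P \<epsilon> \<rho>
  proof
    show "open U" using oU0 O(1) by (simp add: U_def open_Int)
    show "xb \<in> U" using U0(1) O(2) by (simp add: U_def)
    show "xb \<in> M" using O(3) .
    show "M \<inter> U = {x \<in> U. \<Phi> x = 0}" using M_loc UOu by blast
    show "\<And>x. x \<in> M \<inter> U \<Longrightarrow> f x = ereal (fhat x)" using U0(3) UU0 by blast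
    show "\<And>x. x \<in> U \<Longrightarrow> (fhat has_derivative blinfun_apply (Df x)) (at x)" using dfh UU0 by blast
    show "\<And>x. x \<in> U \<Longrightarrow> (Df has_derivative blinfun_apply (D2f x)) (at x)" using d2fh UU0 by blast
    show "continuous_on U D2f" using cD2f UU0 continuous_on_subset by blast
    show "\<And>x. x \<in> U \<Longrightarrow> (\<Phi> has_derivative blinfun_apply (DP x)) (at x)" using dP UOu by blast
    show "\<And>x. x \<in> U \<Longrightarrow> (DP has_derivative blinfun_apply (D2P x)) (at x)" using d2P UOu by blast
    show "continuous_on U D2P" using cD2P UOu continuous_on_subset by blast
    show "surj (blinfun_apply (DP xb))" using Phi_surj fdxb by simp
    show "\<epsilon> > 0" "\<rho> \<ge> 0" using eps by auto
    show "\<And>x' v' u. dist (x', v') (xb, vb) \<le> \<epsilon> \<Longrightarrow> v' \<in> lim_subdiff f x' \<Longrightarrow>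
        f x' \<le> f xb + ereal \<epsilon> \<Longrightarrow> dist u xb \<le> \<epsilon> \<Longrightarrow>
           f u \<ge> f x' + ereal (v' \<bullet> (u - x') - \<rho> / 2 * (norm (u - x'))\<^sup>2)"
      using pr by blast
    show "vb \<in> lim_subdiff f xb" using vb0 .
    show "vb \<in> rel_interior (lim_subdiff f xb)" using vb_ri .
    show "range (adjoint (blinfun_apply (DP xb))) = par (lim_subdiff f xb)"
      using normals0 fdxb by (simp add: normal_sp_def)
    show "inner_lim_within M (lim_subdiff f) xb = lim_subdiff f xb" using innerlim .
    show "\<exists>\<alpha>::real. \<exists>c::real. \<forall>x. f x + ereal (\<alpha> * (norm x)\<^sup>2) \<ge> ereal c"
      using pbdd unfolding prox_bounded_def .
  qed
  obtain r0 where r0: "r0 > 0" and mr: "\<And>r. 0 < r \<and> r < r0 \<Longrightarrow>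
    (\<exists>W p. open W \<and> xb + r *\<^sub>R vb \<in> W \<and>
       (\<forall>z\<in>W. prox r f z = {p z} \<and> p z \<in> M \<inter> U) \<and>
       C1_on W p \<and>
       (\<forall>z\<in>W. let x = p z; T = tangent_sp \<Phi> x in
          (\<exists>!\<mu>. grad (\<lambda>u. lagr fhat \<Phi> u \<mu>) x = (1 / r) *\<^sub>R (z - x)) \<and>
          (let \<mu> = (THE \<mu>. grad (\<lambda>u. lagr fhat \<Phi> u \<mu>) x = (1 / r) *\<^sub>R (z - x));
               A = (\<lambda>h. orth_proj T (h + r *\<^sub>R hess (\<lambda>u. lagr fhat \<Phi> u \<mu>) x h))
           in inj_on A T \<and> A ` T = T \<and>
              (\<forall>w. frechet_derivative p (at z) w = the_inv_into T A (orth_proj T w)))))"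
    using S.main by blast
  show ?thesis
  proof (intro exI[of _ r0] conjI r0 allI impI)
    fix r assume r: "0 < r \<and> r < r0"
    obtain W p where A1: "open W" "xb + r *\<^sub>R vb \<in> W"
      and A3: "\<forall>z\<in>W. prox r f z = {p z} \<and> p z \<in> M \<inter> U"
      and A4: "C1_on W p"
      and A5: "\<forall>z\<in>W. let x = p z; T = tangent_sp \<Phi> x in
          (\<exists>!\<mu>. grad (\<lambda>u. lagr fhat \<Phi> u \<mu>) x = (1 / r) *\<^sub>R (z - x)) \<and>
          (let \<mu> = (THE \<mu>. grad (\<lambda>u. lagr fhat \<Phi> u \<mu>) x = (1 / r) *\<^sub>R (z - x));
               A = (\<lambda>h. orth_proj T (h + r *\<^sub>R hess (\<lambda>u. lagr fhat \<Phi> u \<mu>) x h))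
           in inj_on A T \<and> A ` T = T \<and>
              (\<forall>w. frechet_derivative p (at z) w = the_inv_into T A (orth_proj T w)))"
      using mr[OF r] by blast
    have A3': "\<forall>z\<in>W. prox r f z = {p z} \<and> p z \<in> M \<inter> Ou" using A3 UOu by blast
    show "\<exists>W p. open W \<and> xb + r *\<^sub>R vb \<in> W \<and>
       (\<forall>z\<in>W. prox r f z = {p z} \<and> p z \<in> M \<inter> Ou) \<and>
       C1_on W p \<and>
       (\<forall>z\<in>W. let x = p z; T = tangent_sp \<Phi> x in
          (\<exists>!\<mu>. grad (\<lambda>u. lagr fhat \<Phi> u \<mu>) x = (1 / r) *\<^sub>R (z - x)) \<and>
          (let \<mu> = (THE \<mu>. grad (\<lambda>u. lagr fhat \<Phi> u \<mu>) x = (1 / r) *\<^sub>R (z - x));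
               A = (\<lambda>h. orth_proj T (h + r *\<^sub>R hess (\<lambda>u. lagr fhat \<Phi> u \<mu>) x h))
           in inj_on A T \<and> A ` T = T \<and>
              (\<forall>w. frechet_derivative p (at z) w = the_inv_into T A (orth_proj T w))))"
      by (rule exI[of _ W], rule exI[of _ p]) (use A1 A3' A4 A5 in blast)
  qed
qed


end
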